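(* Let $G$ be a finite group, $K$ a field of characteristic $0$ which is a splitting field for $G$ and all of its subgroups, and $N$ a normal subgroup of $G$ containing the commutator subgroup $G'$. Let $\chi$ be an irreducible character of $G$, $\eta$ an irreducible constituent of $\mathrm{res}^G_N\chi$, and $G_\eta=\{g\in G:{}^g\eta=\eta\}$. Write $\mathrm{ind}_N^{G_\eta}\eta=\sum_{i=1}^s m_i\psi_i$ with positive integers $m_i$ and pairwise distinct irreducible characters $\psi_i$ of $G_\eta$, numbered so that $\mathrm{ind}_{G_\eta}^G\psi_1=\chi$, and put $\psi:=\psi_1$, $m:=m_1$. Then: (i) each $\psi_i$ is of the form $\psi\otimes\omega_i$ for some $\omega_i\in\mathrm{Irr}(G_\eta/N)$; (ii) each $\psi\otimes\omega$ with $\omega\in\mathrm{Irr}(G_\eta/N)$ equals some $\psi_i$; (iii) $m_i=m$ for all $1\le i\le s$, and $[G_\eta:N]=sm^2$.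
   Context: $G$ acts on characters of $N$ by ${}^g\eta(x)=\eta(g^{-1}xg)$. $\mathrm{res}$ and $\mathrm{ind}$ denote restriction and induction of characters. Characters of $G_\eta/N$ are viewed as characters of $G_\eta$ by inflation. (By Clifford theory, the irreducible characters of $G$ whose restriction to $N$ contains $\eta$ are exactly the $\mathrm{ind}_{G_\eta}^G\psi_i$, which are irreducible, so exactly one index satisfies $\mathrm{ind}_{G_\eta}^G\psi_i=\chi$.) *)

theory Defs
  imports "HOL-Algebra.Algebra" "Jordan_Normal_Form.Matrix"
begin

definition mat_tr :: "'k::comm_ring_1 mat \<Rightarrow> 'k" where
  "mat_tr A = (\<Sum>i<dim_row A. A $$ (i, i))"

definition is_rep :: "('g, 'b) monoid_scheme \<Rightarrow> nat \<Rightarrow> ('g \<Rightarrow> 'k::field mat) \<Rightarrow> bool" where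
  "is_rep H n \<rho> \<longleftrightarrow>
     (\<forall>h\<in>carrier H. \<rho> h \<in> carrier_mat n n) \<and>
     (\<forall>h\<in>carrier H. \<forall>k\<in>carrier H. \<rho> (h \<otimes>\<^bsub>H\<^esub> k) = \<rho> h * \<rho> k) \<and>
     \<rho> \<one>\<^bsub>H\<^esub> = 1\<^sub>m n"

definition rep_invariant_subspace ::
  "('g, 'b) monoid_scheme \<Rightarrow> nat \<Rightarrow> ('g \<Rightarrow> 'k::field mat) \<Rightarrow> 'k vec set \<Rightarrow> bool" where
  "rep_invariant_subspace H n \<rho> W \<longleftrightarrow>
     W \<subseteq> carrier_vec n \<and> 0\<^sub>v n \<in> W \<and>
     (\<forall>v\<in>W. \<forall>w\<in>W. v + w \<in> W) \<and>
     (\<forall>c. \<forall>v\<in>W. c \<cdot>\<^sub>v v \<in> W) \<and>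
     (\<forall>h\<in>carrier H. \<forall>v\<in>W. \<rho> h *\<^sub>v v \<in> W)"

definition irr_rep :: "('g, 'b) monoid_scheme \<Rightarrow> nat \<Rightarrow> ('g \<Rightarrow> 'k::field mat) \<Rightarrow> bool" where
  "irr_rep H n \<rho> \<longleftrightarrow> is_rep H n \<rho> \<and> n > 0 \<and>
     (\<forall>W. rep_invariant_subspace H n \<rho> W \<longrightarrow> W = {0\<^sub>v n} \<or> W = carrier_vec n)"

definition char_of :: "('g, 'b) monoid_scheme \<Rightarrow> ('g \<Rightarrow> 'k::field mat) \<Rightarrow> 'g \<Rightarrow> 'k" where
  "char_of H \<rho> = (\<lambda>h. if h \<in> carrier H then mat_tr (\<rho> h) else 0)"

text \<open>K-characters (degree 0 allowed, giving the zero function) and irreducible K-characters.\<close>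
definition is_character :: "('g, 'b) monoid_scheme \<Rightarrow> ('g \<Rightarrow> 'k::field) \<Rightarrow> bool" where
  "is_character H \<phi> \<longleftrightarrow> (\<exists>n (\<rho> :: 'g \<Rightarrow> 'k mat). is_rep H n \<rho> \<and> \<phi> = char_of H \<rho>)"

definition irr_char :: "('g, 'b) monoid_scheme \<Rightarrow> ('g \<Rightarrow> 'k::field) \<Rightarrow> bool" where
  "irr_char H \<phi> \<longleftrightarrow> (\<exists>n (\<rho> :: 'g \<Rightarrow> 'k mat). irr_rep H n \<rho> \<and> \<phi> = char_of H \<rho>)"

definition constituent :: "('g, 'b) monoid_scheme \<Rightarrow> ('g \<Rightarrow> 'k::field) \<Rightarrow> ('g \<Rightarrow> 'k) \<Rightarrow> bool" where
  "constituent H \<eta> \<phi> \<longleftrightarrow> is_character H (\<lambda>h. \<phi> h - \<eta> h)"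

text \<open>K is a splitting field for H: every irreducible K-representation of H is absolutely
  irreducible, i.e. its commuting algebra (endomorphism ring) consists of the scalars only.\<close>
definition splitting_field :: "'k::field itself \<Rightarrow> ('g, 'b) monoid_scheme \<Rightarrow> bool" where
  "splitting_field _ H \<longleftrightarrow>
     (\<forall>n (\<rho> :: 'g \<Rightarrow> 'k mat). irr_rep H n \<rho> \<longrightarrow>
        (\<forall>A \<in> carrier_mat n n. (\<forall>h\<in>carrier H. A * \<rho> h = \<rho> h * A) \<longrightarrow>
           (\<exists>c. A = c \<cdot>\<^sub>m 1\<^sub>m n)))"

definition res_char :: "'g set \<Rightarrow> ('g \<Rightarrow> 'k::field) \<Rightarrow> 'g \<Rightarrow> 'k" where
  "res_char H \<phi> = (\<lambda>h. if h \<in> H then \<phi> h else 0)"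

definition ind_char :: "('g, 'b) monoid_scheme \<Rightarrow> 'g set \<Rightarrow> ('g \<Rightarrow> 'k::field_char_0) \<Rightarrow> 'g \<Rightarrow> 'k" where
  "ind_char G H \<phi> = (\<lambda>g. if g \<in> carrier G then
      (1 / of_nat (card H)) *
        (\<Sum>x\<in>carrier G. if inv\<^bsub>G\<^esub> x \<otimes>\<^bsub>G\<^esub> g \<otimes>\<^bsub>G\<^esub> x \<in> H
                         then \<phi> (inv\<^bsub>G\<^esub> x \<otimes>\<^bsub>G\<^esub> g \<otimes>\<^bsub>G\<^esub> x) else 0)
      else 0)"

text \<open>Inertia group of a character eta of N: G_eta = {g. ^g eta = eta}, ^g eta(x) = eta(g^-1 x g).\<close>
definition inertia :: "('g, 'b) monoid_scheme \<Rightarrow> 'g set \<Rightarrow> ('g \<Rightarrow> 'k) \<Rightarrow> 'g set" where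
  "inertia G N \<eta> = {g \<in> carrier G. \<forall>x\<in>N. \<eta> (inv\<^bsub>G\<^esub> g \<otimes>\<^bsub>G\<^esub> x \<otimes>\<^bsub>G\<^esub> g) = \<eta> x}"

definition inflate :: "('g, 'b) monoid_scheme \<Rightarrow> 'g set \<Rightarrow> 'g set \<Rightarrow> ('g set \<Rightarrow> 'k::zero) \<Rightarrow> 'g \<Rightarrow> 'k" where
  "inflate G H N \<omega> = (\<lambda>g. if g \<in> H then \<omega> (N #>\<^bsub>G\<^esub> g) else 0)"

end

theory Submission
  imports Defs
begin

lemma mult_idx: "A \<in> carrier_mat n m \<Longrightarrow> B \<in> carrier_mat m p \<Longrightarrow> i < n \<Longrightarrow> j < p \<Longrightarrow>
  (A * B) $$ (i,j) = (\<Sum>k<m. A $$ (i,k) * B $$ (k,j))"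
  by (auto simp: scalar_prod_def atLeast0LessThan intro!: sum.cong)

lemma multv_idx: "A \<in> carrier_mat n m \<Longrightarrow> v \<in> carrier_vec m \<Longrightarrow> i < n \<Longrightarrow>
  (A *\<^sub>v v) $ i = (\<Sum>k<m. A $$ (i,k) * v $ k)"
  by (auto simp: scalar_prod_def atLeast0LessThan intro!: sum.cong)

definition subsp :: "nat \<Rightarrow> 'k::field vec set \<Rightarrow> bool" where
  "subsp n W \<longleftrightarrow> W \<subseteq> carrier_vec n \<and> 0\<^sub>v n \<in> W \<and> (\<forall>v\<in>W. \<forall>w\<in>W. v + w \<in> W) \<and> (\<forall>c. \<forall>v\<in>W. c \<cdot>\<^sub>v v \<in> W)"

definition vtl :: "'a vec \<Rightarrow> 'a vec" where "vtl w = vec (dim_vec w - 1) (\<lambda>i. w $ Suc i)"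

definition vcons :: "'a \<Rightarrow> 'a vec \<Rightarrow> 'a vec" where "vcons a w = vec (Suc (dim_vec w)) (\<lambda>i. if i = 0 then a else w $ (i - 1))"

lemma vtl_carrier[simp]: "w \<in> carrier_vec (Suc n) \<Longrightarrow> vtl w \<in> carrier_vec n"
  by (auto simp: vtl_def)

lemma vtl_idx[simp]: "w \<in> carrier_vec (Suc n) \<Longrightarrow> i < n \<Longrightarrow> vtl w $ i = w $ Suc i"
  by (auto simp: vtl_def)

lemma subsp_neg: assumes "subsp n W" "v \<in> W" shows "(-1) \<cdot>\<^sub>v v \<in> W" using assms by (auto simp: subsp_def)

lemma coord_exists:
  fixes W :: "'k::field vec set"
  assumes "subsp n W"
  shows "\<exists>r S T. r \<le> n \<and> S \<in> carrier_mat n n \<and> T \<in> carrier_mat n n \<and> S * T = 1\<^sub>m n \<and> T * S = 1\<^sub>m n \<and>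
     (\<forall>w. w \<in> W \<longleftrightarrow> w \<in> carrier_vec n \<and> (\<forall>k. r \<le> k \<longrightarrow> k < n \<longrightarrow> (T *\<^sub>v w) $ k = 0))"
  using assms
proof (induction n arbitrary: W)
  case 0
  have "W = carrier_vec 0"
  proof
    show "W \<subseteq> carrier_vec 0" using 0 by (auto simp: subsp_def)
    show "carrier_vec 0 \<subseteq> W"
    proof
      fix w :: "'k vec" assume "w \<in> carrier_vec 0"
      then have "w = 0\<^sub>v 0" by auto
      then show "w \<in> W" using 0 by (auto simp: subsp_def)
    qed
  qed
  then show ?case by (intro exI[of _ 0] exI[of _ "1\<^sub>m 0"]) auto
next
  case (Suc n)
  define W' where "W' = vtl ` {w \<in> W. w $ 0 = 0}"
  have WS: "W \<subseteq> carrier_vec (Suc n)" using Suc.prems by (auto simp: subsp_def)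
  have vtl_add: "vtl v + vtl w = vtl (v + w)" if "v \<in> carrier_vec (Suc n)" "w \<in> carrier_vec (Suc n)" for v w :: "'k vec"
    using that by (intro eq_vecI) (auto simp: vtl_def)
  have vtl_smult: "c \<cdot>\<^sub>v vtl w = vtl (c \<cdot>\<^sub>v w)" if "w \<in> carrier_vec (Suc n)" for c and w :: "'k vec"
    using that by (intro eq_vecI) (auto simp: vtl_def)
  have vtl0: "0\<^sub>v n = vtl (0\<^sub>v (Suc n) :: 'k vec)" by (intro eq_vecI) (auto simp: vtl_def)
  have sub': "subsp n W'"
    unfolding subsp_def
  proof (intro conjI ballI allI)
    show "W' \<subseteq> carrier_vec n" using WS unfolding W'_def by auto
    show "0\<^sub>v n \<in> W'" unfolding W'_def vtl0 using Suc.prems by (auto simp: subsp_def)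
    fix v w assume "v \<in> W'" "w \<in> W'"
    then obtain v0 w0 where v0: "v0 \<in> W" "v0 $ 0 = 0" "v = vtl v0" and w0: "w0 \<in> W" "w0 $ 0 = 0" "w = vtl w0"
      unfolding W'_def by auto
    have c: "v0 \<in> carrier_vec (Suc n)" "w0 \<in> carrier_vec (Suc n)" using v0 w0 WS by auto
    have "v0 + w0 \<in> W" using Suc.prems v0 w0 by (auto simp: subsp_def)
    moreover have "(v0 + w0) $ 0 = 0" using c v0 w0 by auto
    ultimately show "v + w \<in> W'" unfolding W'_def v0 w0 using vtl_add[OF c] by auto
  next
    fix c v assume "v \<in> W'"
    then obtain v0 where v0: "v0 \<in> W" "v0 $ 0 = 0" "v = vtl v0"
      unfolding W'_def by auto
    have cv: "v0 \<in> carrier_vec (Suc n)" using v0 WS by auto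
    have "c \<cdot>\<^sub>v v0 \<in> W" using Suc.prems v0 by (auto simp: subsp_def)
    moreover have "(c \<cdot>\<^sub>v v0) $ 0 = 0" using cv v0 by auto
    ultimately show "c \<cdot>\<^sub>v v \<in> W'" unfolding W'_def v0 using vtl_smult[OF cv] by auto
  qed
  from Suc.IH[OF sub'] obtain r S' T' where r: "r \<le> n" and S': "S' \<in> carrier_mat n n" and T': "T' \<in> carrier_mat n n"
    and ST': "S' * T' = 1\<^sub>m n" and TS': "T' * S' = 1\<^sub>m n"
    and W'char: "\<And>w. w \<in> W' \<longleftrightarrow> w \<in> carrier_vec n \<and> (\<forall>k. r \<le> k \<longrightarrow> k < n \<longrightarrow> (T' *\<^sub>v w) $ k = 0)" by blast
  have veq: "v = w" if "v \<in> carrier_vec (Suc n)" "w \<in> carrier_vec (Suc n)" "v $ 0 = w $ 0" "vtl v = vtl w" for v w :: "'k vec"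
  proof (intro eq_vecI)
    fix i assume i: "i < dim_vec w"
    show "v $ i = w $ i"
    proof (cases i)
      case (Suc j)
      then have "vtl v $ j = vtl w $ j" using that by simp
      then show ?thesis using Suc that i vtl_idx[of v n j] vtl_idx[of w n j] by simp
    qed (use that in simp)
  qed (use that in simp)
  show ?case
  proof (cases "\<exists>u\<in>W. u $ 0 \<noteq> 0")
    case False
    define S :: "'k mat" where "S = mat (Suc n) (Suc n) (\<lambda>(i,j). if i = 0 then (if j = n then 1 else 0) else (if j = n then 0 else S' $$ (i-1,j)))"
    define T :: "'k mat" where "T = mat (Suc n) (Suc n) (\<lambda>(i,j). if i = n then (if j = 0 then 1 else 0) else (if j = 0 then 0 else T' $$ (i,j-1)))"
    have Sc: "S \<in> carrier_mat (Suc n) (Suc n)" and Tc: "T \<in> carrier_mat (Suc n) (Suc n)" unfolding S_def T_def by auto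
    have ST: "S * T = 1\<^sub>m (Suc n)"
    proof (intro eq_matI)
      fix i j assume ij: "i < dim_row (1\<^sub>m (Suc n) :: 'k mat)" "j < dim_col (1\<^sub>m (Suc n) :: 'k mat)"
      then have ij': "i < Suc n" "j < Suc n" by auto
      have "(S * T) $$ (i,j) = (\<Sum>k<n. S $$ (i,k) * T $$ (k,j)) + S $$ (i,n) * T $$ (n,j)"
        using mult_idx[OF Sc Tc ij'] by simp
      also have "\<dots> = 1\<^sub>m (Suc n) $$ (i,j)"
      proof (cases "i = 0")
        case True
        then show ?thesis using ij' unfolding S_def T_def by auto
      next
        case False
        show ?thesis
        proof (cases "j = 0")
          case True
          then show ?thesis using ij' False unfolding S_def T_def by auto
        next
          case j: False
          have "(\<Sum>k<n. S $$ (i,k) * T $$ (k,j)) = (\<Sum>k<n. S' $$ (i-1,k) * T' $$ (k,j-1))"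
            using ij' False j unfolding S_def T_def by (intro sum.cong) auto
          also have "\<dots> = (S' * T') $$ (i-1,j-1)" using mult_idx[OF S' T', of "i-1" "j-1"] ij' False j by simp
          finally show ?thesis using ST' ij' False j unfolding S_def T_def by auto
        qed
      qed
      finally show "(S * T) $$ (i,j) = 1\<^sub>m (Suc n) $$ (i,j)" .
    qed (use Sc Tc in auto)
    have TS: "T * S = 1\<^sub>m (Suc n)"
    proof (intro eq_matI)
      fix i j assume ij: "i < dim_row (1\<^sub>m (Suc n) :: 'k mat)" "j < dim_col (1\<^sub>m (Suc n) :: 'k mat)"
      then have ij': "i < Suc n" "j < Suc n" by auto
      have "(T * S) $$ (i,j) = T $$ (i,0) * S $$ (0,j) + (\<Sum>k<n. T $$ (i,Suc k) * S $$ (Suc k,j))"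
        using mult_idx[OF Tc Sc ij'] by (simp del: sum.lessThan_Suc add: sum.lessThan_Suc_shift)
      also have "\<dots> = 1\<^sub>m (Suc n) $$ (i,j)"
      proof (cases "i = n")
        case True
        then show ?thesis using ij' unfolding S_def T_def by auto
      next
        case False
        then have i: "i < n" using ij' by auto
        show ?thesis
        proof (cases "j = n")
          case True
          then show ?thesis using ij' i unfolding S_def T_def by auto
        next
          case j: False
          then have j': "j < n" using ij' by auto
          have "(\<Sum>k<n. T $$ (i,Suc k) * S $$ (Suc k,j)) = (\<Sum>k<n. T' $$ (i,k) * S' $$ (k,j))"
            using i j' unfolding S_def T_def by (intro sum.cong) auto
          also have "\<dots> = (T' * S') $$ (i,j)" using mult_idx[OF T' S', of i j] i j' by simp
          finally show ?thesis using TS' i j' unfolding S_def T_def by auto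
        qed
      qed
      finally show "(T * S) $$ (i,j) = 1\<^sub>m (Suc n) $$ (i,j)" .
    qed (use Sc Tc in auto)
    have Tw1: "(T *\<^sub>v w) $ k = (T' *\<^sub>v vtl w) $ k" if "w \<in> carrier_vec (Suc n)" "k < n" for w k
    proof -
      have "(T *\<^sub>v w) $ k = T $$ (k,0) * w $ 0 + (\<Sum>j<n. T $$ (k,Suc j) * w $ Suc j)"
        using multv_idx[OF Tc that(1), of k] that by (simp del: sum.lessThan_Suc add: sum.lessThan_Suc_shift)
      also have "\<dots> = (\<Sum>j<n. T' $$ (k,j) * vtl w $ j)" using that unfolding T_def by (auto intro!: sum.cong)
      also have "\<dots> = (T' *\<^sub>v vtl w) $ k" using multv_idx[OF T' vtl_carrier[OF that(1)], of k] that by simp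
      finally show ?thesis .
    qed
    have Tw2: "(T *\<^sub>v w) $ n = w $ 0" if "w \<in> carrier_vec (Suc n)" for w
    proof -
      have "(T *\<^sub>v w) $ n = T $$ (n,0) * w $ 0 + (\<Sum>j<n. T $$ (n,Suc j) * w $ Suc j)"
        using multv_idx[OF Tc that(1), of n] that by (simp del: sum.lessThan_Suc add: sum.lessThan_Suc_shift)
      also have "\<dots> = w $ 0" unfolding T_def by auto
      finally show ?thesis .
    qed
    have "w \<in> W \<longleftrightarrow> w \<in> carrier_vec (Suc n) \<and> (\<forall>k. r \<le> k \<longrightarrow> k < Suc n \<longrightarrow> (T *\<^sub>v w) $ k = 0)" for w
    proof
      assume w: "w \<in> W"
      then have wc: "w \<in> carrier_vec (Suc n)" using WS by auto
      have w0: "w $ 0 = 0" using False w by auto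
      have "vtl w \<in> W'" unfolding W'_def using w w0 by auto
      then have "\<forall>k. r \<le> k \<longrightarrow> k < n \<longrightarrow> (T' *\<^sub>v vtl w) $ k = 0" using W'char by auto
      then show "w \<in> carrier_vec (Suc n) \<and> (\<forall>k. r \<le> k \<longrightarrow> k < Suc n \<longrightarrow> (T *\<^sub>v w) $ k = 0)"
        using wc Tw1[OF wc] Tw2[OF wc] w0 by (metis less_Suc_eq)
    next
      assume a: "w \<in> carrier_vec (Suc n) \<and> (\<forall>k. r \<le> k \<longrightarrow> k < Suc n \<longrightarrow> (T *\<^sub>v w) $ k = 0)"
      then have wc: "w \<in> carrier_vec (Suc n)" by auto
      have w0: "w $ 0 = 0" using a Tw2[OF wc] r by auto
      have "vtl w \<in> W'" using W'char a Tw1[OF wc] wc by auto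
      then obtain w' where w': "w' \<in> W" "w' $ 0 = 0" "vtl w' = vtl w" unfolding W'_def by auto
      have "w' = w" using veq[of w' w] w' w0 wc WS by auto
      then show "w \<in> W" using w' by auto
    qed
    then show ?thesis using r Sc Tc ST TS by (intro exI[of _ r] exI[of _ S] exI[of _ T]) auto
  next
    case True
    then obtain u where u: "u \<in> W" "u $ 0 \<noteq> 0" by auto
    define u1 where "u1 = (1 / u $ 0) \<cdot>\<^sub>v u"
    have uc: "u \<in> carrier_vec (Suc n)" using u WS by auto
    have u1W: "u1 \<in> W" using Suc.prems u unfolding u1_def subsp_def by auto
    have u1c: "u1 \<in> carrier_vec (Suc n)" using uc unfolding u1_def by auto
    have u10: "u1 $ 0 = 1" using u uc unfolding u1_def by auto
    define tu where "tu = vtl u1"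
    have tuc: "tu \<in> carrier_vec n" unfolding tu_def using u1c by auto
    define y where "y = T' *\<^sub>v tu"
    have yc: "y \<in> carrier_vec n" unfolding y_def using T' tuc by auto
    have Sy: "S' *\<^sub>v y = tu" unfolding y_def using S' T' tuc ST'
      by (metis assoc_mult_mat_vec one_mult_mat_vec)
    define S :: "'k mat" where "S = mat (Suc n) (Suc n) (\<lambda>(i,j). if j = 0 then u1 $ i else if i = 0 then 0 else S' $$ (i-1,j-1))"
    define T :: "'k mat" where "T = mat (Suc n) (Suc n) (\<lambda>(i,j). if i = 0 then (if j = 0 then 1 else 0) else if j = 0 then - y $ (i-1) else T' $$ (i-1,j-1))"
    have Sc: "S \<in> carrier_mat (Suc n) (Suc n)" and Tc: "T \<in> carrier_mat (Suc n) (Suc n)" unfolding S_def T_def by auto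
    have ST: "S * T = 1\<^sub>m (Suc n)"
    proof (intro eq_matI)
      fix i j assume ij: "i < dim_row (1\<^sub>m (Suc n) :: 'k mat)" "j < dim_col (1\<^sub>m (Suc n) :: 'k mat)"
      then have ij': "i < Suc n" "j < Suc n" by auto
      have "(S * T) $$ (i,j) = S $$ (i,0) * T $$ (0,j) + (\<Sum>k<n. S $$ (i,Suc k) * T $$ (Suc k,j))"
        using mult_idx[OF Sc Tc ij'] by (simp del: sum.lessThan_Suc add: sum.lessThan_Suc_shift)
      also have "\<dots> = 1\<^sub>m (Suc n) $$ (i,j)"
      proof (cases "i = 0")
        case True
        then show ?thesis using ij' u10 unfolding S_def T_def by auto
      next
        case False
        show ?thesis
        proof (cases "j = 0")
          case True
          have "(\<Sum>k<n. S $$ (i,Suc k) * T $$ (Suc k,j)) = - (\<Sum>k<n. S' $$ (i-1,k) * y $ k)"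
            using ij' False True unfolding S_def T_def by (auto simp: sum_negf intro!: sum.cong)
          also have "\<dots> = - (S' *\<^sub>v y) $ (i-1)" using multv_idx[OF S' yc, of "i-1"] ij' False by simp
          also have "\<dots> = - u1 $ i" unfolding Sy tu_def using ij' False u1c by simp
          finally show ?thesis using ij' False True unfolding S_def T_def by auto
        next
          case j: False
          have "(\<Sum>k<n. S $$ (i,Suc k) * T $$ (Suc k,j)) = (\<Sum>k<n. S' $$ (i-1,k) * T' $$ (k,j-1))"
            using ij' False j unfolding S_def T_def by (intro sum.cong) auto
          also have "\<dots> = (S' * T') $$ (i-1,j-1)" using mult_idx[OF S' T', of "i-1" "j-1"] ij' False j by simp
          finally show ?thesis using ST' ij' False j unfolding S_def T_def by auto
        qed
      qed
      finally show "(S * T) $$ (i,j) = 1\<^sub>m (Suc n) $$ (i,j)" .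
    qed (use Sc Tc in auto)
    have TS: "T * S = 1\<^sub>m (Suc n)"
    proof (intro eq_matI)
      fix i j assume ij: "i < dim_row (1\<^sub>m (Suc n) :: 'k mat)" "j < dim_col (1\<^sub>m (Suc n) :: 'k mat)"
      then have ij': "i < Suc n" "j < Suc n" by auto
      have "(T * S) $$ (i,j) = T $$ (i,0) * S $$ (0,j) + (\<Sum>k<n. T $$ (i,Suc k) * S $$ (Suc k,j))"
        using mult_idx[OF Tc Sc ij'] by (simp del: sum.lessThan_Suc add: sum.lessThan_Suc_shift)
      also have "\<dots> = 1\<^sub>m (Suc n) $$ (i,j)"
      proof (cases "i = 0")
        case True
        then show ?thesis using ij' u10 unfolding S_def T_def by auto
      next
        case False
        show ?thesis
        proof (cases "j = 0")
          case True
          have "(\<Sum>k<n. T $$ (i,Suc k) * S $$ (Suc k,j)) = (\<Sum>k<n. T' $$ (i-1,k) * tu $ k)"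
            using ij' False True u1c unfolding S_def T_def tu_def by (auto intro!: sum.cong)
          also have "\<dots> = y $ (i-1)" using multv_idx[OF T' tuc, of "i-1"] ij' False unfolding y_def by simp
          finally show ?thesis using ij' False True u10 unfolding S_def T_def by auto
        next
          case j: False
          have "(\<Sum>k<n. T $$ (i,Suc k) * S $$ (Suc k,j)) = (\<Sum>k<n. T' $$ (i-1,k) * S' $$ (k,j-1))"
            using ij' False j unfolding S_def T_def by (intro sum.cong) auto
          also have "\<dots> = (T' * S') $$ (i-1,j-1)" using mult_idx[OF T' S', of "i-1" "j-1"] ij' False j by simp
          finally show ?thesis using TS' ij' False j unfolding S_def T_def by auto
        qed
      qed
      finally show "(T * S) $$ (i,j) = 1\<^sub>m (Suc n) $$ (i,j)" .
    qed (use Sc Tc in auto)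
    have Tw0: "(T *\<^sub>v w) $ 0 = w $ 0" if "w \<in> carrier_vec (Suc n)" for w
    proof -
      have "(T *\<^sub>v w) $ 0 = T $$ (0,0) * w $ 0 + (\<Sum>j<n. T $$ (0,Suc j) * w $ Suc j)"
        using multv_idx[OF Tc that(1), of 0] that by (simp del: sum.lessThan_Suc add: sum.lessThan_Suc_shift)
      also have "\<dots> = w $ 0" unfolding T_def by auto
      finally show ?thesis .
    qed
    have Tw1: "(T *\<^sub>v w) $ Suc k = (T' *\<^sub>v (vtl w + (- w $ 0) \<cdot>\<^sub>v tu)) $ k" if "w \<in> carrier_vec (Suc n)" "k < n" for w k
    proof -
      have c2: "vtl w + (- w $ 0) \<cdot>\<^sub>v tu \<in> carrier_vec n" using that tuc by auto
      have "(T *\<^sub>v w) $ Suc k = T $$ (Suc k,0) * w $ 0 + (\<Sum>j<n. T $$ (Suc k,Suc j) * w $ Suc j)"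
        using multv_idx[OF Tc that(1), of "Suc k"] that by (simp del: sum.lessThan_Suc add: sum.lessThan_Suc_shift)
      also have "\<dots> = - y $ k * w $ 0 + (\<Sum>j<n. T' $$ (k,j) * vtl w $ j)" using that unfolding T_def by (auto intro!: sum.cong)
      also have "(\<Sum>j<n. T' $$ (k,j) * vtl w $ j) = (\<Sum>j<n. T' $$ (k,j) * (vtl w + (- w $ 0) \<cdot>\<^sub>v tu) $ j) + w $ 0 * (\<Sum>j<n. T' $$ (k,j) * tu $ j)"
        using that tuc by (auto simp: algebra_simps sum_distrib_left sum.distrib[symmetric] intro!: sum.cong)
      also have "(\<Sum>j<n. T' $$ (k,j) * tu $ j) = y $ k" using multv_idx[OF T' tuc, of k] that unfolding y_def by simp
      also have "(\<Sum>j<n. T' $$ (k,j) * (vtl w + (- w $ 0) \<cdot>\<^sub>v tu) $ j) = (T' *\<^sub>v (vtl w + (- w $ 0) \<cdot>\<^sub>v tu)) $ k"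
        using multv_idx[OF T' c2, of k] that by simp
      finally show ?thesis by (simp add: algebra_simps)
    qed
    have "w \<in> W \<longleftrightarrow> w \<in> carrier_vec (Suc n) \<and> (\<forall>k. Suc r \<le> k \<longrightarrow> k < Suc n \<longrightarrow> (T *\<^sub>v w) $ k = 0)" for w
    proof
      assume w: "w \<in> W"
      then have wc: "w \<in> carrier_vec (Suc n)" using WS by auto
      define w' where "w' = w + (- w $ 0) \<cdot>\<^sub>v u1"
      have "w' \<in> W" using Suc.prems w u1W unfolding w'_def subsp_def by auto
      moreover have "w' $ 0 = 0" unfolding w'_def using wc u1c u10 by auto
      moreover have "vtl w' = vtl w + (- w $ 0) \<cdot>\<^sub>v tu" unfolding w'_def tu_def
        using wc u1c by (intro eq_vecI) (auto simp: vtl_def)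
      ultimately have "vtl w + (- w $ 0) \<cdot>\<^sub>v tu \<in> W'" unfolding W'_def by (metis (mono_tags, lifting) image_eqI mem_Collect_eq)
      then have "\<forall>k. r \<le> k \<longrightarrow> k < n \<longrightarrow> (T' *\<^sub>v (vtl w + (- w $ 0) \<cdot>\<^sub>v tu)) $ k = 0" using W'char by auto
      then show "w \<in> carrier_vec (Suc n) \<and> (\<forall>k. Suc r \<le> k \<longrightarrow> k < Suc n \<longrightarrow> (T *\<^sub>v w) $ k = 0)"
        using wc Tw1[OF wc] by (metis Suc_le_D Suc_le_mono Suc_less_SucD)
    next
      assume a: "w \<in> carrier_vec (Suc n) \<and> (\<forall>k. Suc r \<le> k \<longrightarrow> k < Suc n \<longrightarrow> (T *\<^sub>v w) $ k = 0)"
      then have wc: "w \<in> carrier_vec (Suc n)" by auto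
      have "\<forall>k. r \<le> k \<longrightarrow> k < n \<longrightarrow> (T' *\<^sub>v (vtl w + (- w $ 0) \<cdot>\<^sub>v tu)) $ k = 0"
        using a Tw1[OF wc] by auto
      then have "vtl w + (- w $ 0) \<cdot>\<^sub>v tu \<in> W'" using W'char wc tuc by auto
      then obtain x where x: "x \<in> W" "x $ 0 = 0" "vtl x = vtl w + (- w $ 0) \<cdot>\<^sub>v tu" unfolding W'_def by auto
      have xc: "x \<in> carrier_vec (Suc n)" using x WS by auto
      have "x + w $ 0 \<cdot>\<^sub>v u1 \<in> W" using Suc.prems x u1W unfolding subsp_def by auto
      moreover have "x + w $ 0 \<cdot>\<^sub>v u1 = w"
      proof (rule veq)
        show "x + w $ 0 \<cdot>\<^sub>v u1 \<in> carrier_vec (Suc n)" using xc u1c by auto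
        show "(x + w $ 0 \<cdot>\<^sub>v u1) $ 0 = w $ 0" using xc u1c x u10 by auto
        show "vtl (x + w $ 0 \<cdot>\<^sub>v u1) = vtl w"
        proof (intro eq_vecI)
          fix i assume i: "i < dim_vec (vtl w)"
          then have i': "i < n" using wc by (simp add: vtl_def)
          have "vtl x $ i = vtl w $ i - w $ 0 * tu $ i" using x(3) i' tuc wc by simp
          then show "vtl (x + w $ 0 \<cdot>\<^sub>v u1) $ i = vtl w $ i"
            using i' xc u1c wc unfolding tu_def by (simp add: vtl_def)
        qed (use xc u1c wc in \<open>simp add: vtl_def\<close>)
      qed (use wc in auto)
      ultimately show "w \<in> W" by simp
    qed
    then show ?thesis using r Sc Tc ST TS by (intro exI[of _ "Suc r"] exI[of _ S] exI[of _ T]) auto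
  qed
qed


lemma sum_split_at: fixes n r :: nat shows "r \<le> n \<Longrightarrow> (\<Sum>k<n. f k) = (\<Sum>k<r. f k) + (\<Sum>k<n-r. f (k + r))"
proof (induction n)
  case 0 then show ?case by simp
next
  case (Suc n)
  show ?case
  proof (cases "r = Suc n")
    case True then show ?thesis by simp
  next
    case False
    then have "r \<le> n" using Suc by auto
    then show ?thesis using Suc by (simp add: Suc_diff_le add.assoc)
  qed
qed

lemma mat_tr_comm: assumes "A \<in> carrier_mat n m" "B \<in> carrier_mat m n"
  shows "mat_tr (A * B) = mat_tr (B * A)"
proof -
  have "mat_tr (A * B) = (\<Sum>i<n. (A * B) $$ (i,i))" using assms by (simp add: mat_tr_def)
  also have "\<dots> = (\<Sum>i<n. \<Sum>k<m. A $$ (i,k) * B $$ (k,i))"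
    by (rule sum.cong[OF refl]) (auto simp: mult_idx[OF assms])
  also have "\<dots> = (\<Sum>k<m. \<Sum>i<n. B $$ (k,i) * A $$ (i,k))" by (subst sum.swap) (simp add: mult.commute)
  also have "\<dots> = (\<Sum>i<m. (B * A) $$ (i,i))"
    by (rule sum.cong[OF refl]) (auto simp: mult_idx[OF assms(2,1)])
  also have "\<dots> = mat_tr (B * A)" using assms by (simp add: mat_tr_def)
  finally show ?thesis .
qed

lemma rep_split:
  fixes \<rho> :: "'g \<Rightarrow> 'k::field mat"
  assumes rep: "is_rep H n \<rho>" and inv: "rep_invariant_subspace H n \<rho> W"
    and W0: "W \<noteq> {0\<^sub>v n}" and W1: "W \<noteq> carrier_vec n"
  shows "\<exists>r \<sigma> \<tau>. r < n \<and> n - r < n \<and> is_rep H r \<sigma> \<and> is_rep H (n - r) \<tau> \<and>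
     (\<forall>h\<in>carrier H. mat_tr (\<rho> h) = mat_tr (\<sigma> h) + mat_tr (\<tau> h))"
proof -
  have sub: "subsp n W" using inv unfolding subsp_def rep_invariant_subspace_def by auto
  from coord_exists[OF sub] obtain r S T where r: "r \<le> n" and S: "S \<in> carrier_mat n n" and T: "T \<in> carrier_mat n n"
    and ST: "S * T = 1\<^sub>m n" and TS: "T * S = 1\<^sub>m n"
    and Wc: "\<And>w. w \<in> W \<longleftrightarrow> w \<in> carrier_vec n \<and> (\<forall>k. r \<le> k \<longrightarrow> k < n \<longrightarrow> (T *\<^sub>v w) $ k = 0)" by blast
  have rhoc: "\<rho> h \<in> carrier_mat n n" if "h \<in> carrier H" for h using rep that unfolding is_rep_def by auto
  have r0: "r \<noteq> 0"
  proof
    assume "r = 0"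
    have "W \<subseteq> {0\<^sub>v n}"
    proof
      fix w assume w: "w \<in> W"
      then have wc: "w \<in> carrier_vec n" and tw: "\<forall>k<n. (T *\<^sub>v w) $ k = 0" using Wc \<open>r = 0\<close> by auto
      have "T *\<^sub>v w = 0\<^sub>v n" using tw T by (intro eq_vecI) auto
      then have "S *\<^sub>v (T *\<^sub>v w) = 0\<^sub>v n" using S by auto
      moreover have "S *\<^sub>v (T *\<^sub>v w) = w" using S T wc ST by (metis assoc_mult_mat_vec one_mult_mat_vec)
      ultimately show "w \<in> {0\<^sub>v n}" by simp
    qed
    moreover have "0\<^sub>v n \<in> W" using inv unfolding rep_invariant_subspace_def by auto
    ultimately show False using W0 by auto
  qed
  have rn: "r \<noteq> n"
  proof
    assume "r = n"
    then have "W = carrier_vec n" using Wc by auto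
    then show False using W1 by simp
  qed
  define M where "M h = T * \<rho> h * S" for h
  have Mc: "M h \<in> carrier_mat n n" if "h \<in> carrier H" for h unfolding M_def using S T rhoc[OF that] by auto
  have Mmult: "M (g \<otimes>\<^bsub>H\<^esub> h) = M g * M h" if "g \<in> carrier H" "h \<in> carrier H" for g h
  proof -
    have "M g * M h = T * \<rho> g * (S * T) * \<rho> h * S" unfolding M_def
      using S T rhoc[OF that(1)] rhoc[OF that(2)] by (simp add: assoc_mult_mat[of _ n n _ n _ n])
    also have "\<dots> = T * (\<rho> g * \<rho> h) * S" unfolding ST
      using S T rhoc[OF that(1)] rhoc[OF that(2)] by (simp add: assoc_mult_mat[of _ n n _ n _ n])
    finally show ?thesis unfolding M_def using rep that unfolding is_rep_def by auto
  qed
  have M1: "M \<one>\<^bsub>H\<^esub> = 1\<^sub>m n" unfolding M_def using rep TS T unfolding is_rep_def by auto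
  have Mzero: "M h $$ (k,j) = 0" if h: "h \<in> carrier H" and "j < r" "r \<le> k" "k < n" for h k j
  proof -
    define v where "v = S *\<^sub>v unit_vec n j"
    have vc: "v \<in> carrier_vec n" unfolding v_def using S by auto
    have "T *\<^sub>v v = unit_vec n j" unfolding v_def using S T TS
      by (metis assoc_mult_mat_vec one_mult_mat_vec unit_vec_carrier)
    then have "v \<in> W" using Wc vc that by auto
    then have "\<rho> h *\<^sub>v v \<in> W" using inv h unfolding rep_invariant_subspace_def by auto
    then have "(T *\<^sub>v (\<rho> h *\<^sub>v v)) $ k = 0" using Wc that by auto
    moreover have "T *\<^sub>v (\<rho> h *\<^sub>v v) = M h *\<^sub>v unit_vec n j" unfolding M_def v_def
      using S T rhoc[OF h] by (simp add: assoc_mult_mat_vec[of _ n n _ n])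
    moreover have "(M h *\<^sub>v unit_vec n j) $ k = M h $$ (k,j)"
    proof -
      have "(M h *\<^sub>v unit_vec n j) $ k = (\<Sum>l<n. M h $$ (k,l) * unit_vec n j $ l)"
        using multv_idx[OF Mc[OF h], of "unit_vec n j" k] that by simp
      also have "\<dots> = (\<Sum>l<n. if l = j then M h $$ (k,l) else 0)" using that by (intro sum.cong) auto
      finally show ?thesis using that by simp
    qed
    ultimately show ?thesis by simp
  qed
  define \<sigma> where "\<sigma> h = mat r r (\<lambda>(i,j). M h $$ (i,j))" for h
  define \<tau> where "\<tau> h = mat (n-r) (n-r) (\<lambda>(i,j). M h $$ (i+r,j+r))" for h
  have rep\<sigma>: "is_rep H r \<sigma>"
    unfolding is_rep_def
  proof (intro conjI ballI)
    fix h assume "h \<in> carrier H" then show "\<sigma> h \<in> carrier_mat r r" unfolding \<sigma>_def by auto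
  next
    fix g h assume gh: "g \<in> carrier H" "h \<in> carrier H"
    show "\<sigma> (g \<otimes>\<^bsub>H\<^esub> h) = \<sigma> g * \<sigma> h"
    proof (intro eq_matI)
      fix i j assume ij: "i < dim_row (\<sigma> g * \<sigma> h)" "j < dim_col (\<sigma> g * \<sigma> h)"
      then have ij': "i < r" "j < r" unfolding \<sigma>_def by auto
      have "\<sigma> (g \<otimes>\<^bsub>H\<^esub> h) $$ (i,j) = (\<Sum>k<n. M g $$ (i,k) * M h $$ (k,j))"
        unfolding \<sigma>_def Mmult[OF gh] using ij' r mult_idx[OF Mc[OF gh(1)] Mc[OF gh(2)], of i j] by auto
      also have "\<dots> = (\<Sum>k<r. M g $$ (i,k) * M h $$ (k,j)) + (\<Sum>k<n-r. M g $$ (i,k+r) * M h $$ (k+r,j))"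
        by (rule sum_split_at[OF r])
      also have "(\<Sum>k<n-r. M g $$ (i,k+r) * M h $$ (k+r,j)) = 0"
        using Mzero[OF gh(2) ij'(2)] by (intro sum.neutral) auto
      also have "(\<Sum>k<r. M g $$ (i,k) * M h $$ (k,j)) = (\<sigma> g * \<sigma> h) $$ (i,j)"
        using ij' by (subst mult_idx[of _ r r _ r]) (auto simp: \<sigma>_def intro!: sum.cong)
      finally show "\<sigma> (g \<otimes>\<^bsub>H\<^esub> h) $$ (i,j) = (\<sigma> g * \<sigma> h) $$ (i,j)" by simp
    qed (auto simp: \<sigma>_def)
  next
    show "\<sigma> \<one>\<^bsub>H\<^esub> = 1\<^sub>m r" unfolding \<sigma>_def M1 using r by (intro eq_matI) auto
  qed
  have rep\<tau>: "is_rep H (n-r) \<tau>"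
    unfolding is_rep_def
  proof (intro conjI ballI)
    fix h assume "h \<in> carrier H" then show "\<tau> h \<in> carrier_mat (n-r) (n-r)" unfolding \<tau>_def by auto
  next
    fix g h assume gh: "g \<in> carrier H" "h \<in> carrier H"
    show "\<tau> (g \<otimes>\<^bsub>H\<^esub> h) = \<tau> g * \<tau> h"
    proof (intro eq_matI)
      fix i j assume ij: "i < dim_row (\<tau> g * \<tau> h)" "j < dim_col (\<tau> g * \<tau> h)"
      then have ij': "i < n-r" "j < n-r" unfolding \<tau>_def by auto
      have "\<tau> (g \<otimes>\<^bsub>H\<^esub> h) $$ (i,j) = (\<Sum>k<n. M g $$ (i+r,k) * M h $$ (k,j+r))"
        unfolding \<tau>_def Mmult[OF gh] using ij' r mult_idx[OF Mc[OF gh(1)] Mc[OF gh(2)], of "i+r" "j+r"] by auto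
      also have "\<dots> = (\<Sum>k<r. M g $$ (i+r,k) * M h $$ (k,j+r)) + (\<Sum>k<n-r. M g $$ (i+r,k+r) * M h $$ (k+r,j+r))"
        by (rule sum_split_at[OF r])
      also have "(\<Sum>k<r. M g $$ (i+r,k) * M h $$ (k,j+r)) = 0"
        using Mzero[OF gh(1)] ij' by (intro sum.neutral) auto
      also have "(\<Sum>k<n-r. M g $$ (i+r,k+r) * M h $$ (k+r,j+r)) = (\<tau> g * \<tau> h) $$ (i,j)"
        using ij' by (subst mult_idx[of _ "n-r" "n-r" _ "n-r"]) (auto simp: \<tau>_def intro!: sum.cong)
      finally show "\<tau> (g \<otimes>\<^bsub>H\<^esub> h) $$ (i,j) = (\<tau> g * \<tau> h) $$ (i,j)" by simp
    qed (auto simp: \<tau>_def)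
  next
    show "\<tau> \<one>\<^bsub>H\<^esub> = 1\<^sub>m (n-r)" unfolding \<tau>_def M1 using r by (intro eq_matI) auto
  qed
  have tr: "mat_tr (\<rho> h) = mat_tr (\<sigma> h) + mat_tr (\<tau> h)" if h: "h \<in> carrier H" for h
  proof -
    have "mat_tr (M h) = mat_tr (T * (\<rho> h * S))" unfolding M_def using T S rhoc[OF h] by (simp add: assoc_mult_mat[of _ n n _ n _ n])
    also have "\<dots> = mat_tr ((\<rho> h * S) * T)" using T S rhoc[OF h] by (intro mat_tr_comm[of _ n n]) auto
    also have "\<dots> = mat_tr (\<rho> h)" using T S rhoc[OF h] ST by (simp add: assoc_mult_mat[of _ n n _ n _ n])
    finally have "mat_tr (\<rho> h) = mat_tr (M h)" by simp
    also have "\<dots> = (\<Sum>k<n. M h $$ (k,k))" unfolding mat_tr_def using Mc[OF h] by simp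
    also have "\<dots> = (\<Sum>k<r. M h $$ (k,k)) + (\<Sum>k<n-r. M h $$ (k+r,k+r))" by (rule sum_split_at[OF r])
    also have "\<dots> = mat_tr (\<sigma> h) + mat_tr (\<tau> h)" unfolding mat_tr_def \<sigma>_def \<tau>_def by simp
    finally show ?thesis .
  qed
  show ?thesis using rep\<sigma> rep\<tau> tr r r0 rn by (intro exI[of _ r] exI[of _ \<sigma>] exI[of _ \<tau>]) auto
qed

lemma char_decomp:
  fixes \<rho> :: "'g \<Rightarrow> 'k::field mat"
  assumes "is_rep H n \<rho>"
  shows "\<exists>xs. (\<forall>\<chi>\<in>set xs. irr_char H \<chi>) \<and> char_of H \<rho> = (\<lambda>h. \<Sum>\<chi>\<leftarrow>xs. \<chi> h)"
  using assms
proof (induction n arbitrary: \<rho> rule: less_induct)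
  case (less n)
  show ?case
  proof (cases "n = 0")
    case True
    have "char_of H \<rho> = (\<lambda>h. 0)"
    proof
      fix h show "char_of H \<rho> h = 0"
        using less.prems True unfolding char_of_def is_rep_def mat_tr_def by auto
    qed
    then show ?thesis by (intro exI[of _ "[]"]) auto
  next
    case False
    show ?thesis
    proof (cases "irr_rep H n \<rho>")
      case True
      then have "irr_char H (char_of H \<rho>)" unfolding irr_char_def by auto
      then show ?thesis by (intro exI[of _ "[char_of H \<rho>]"]) auto
    next
      case nirr: False
      then obtain W where W: "rep_invariant_subspace H n \<rho> W" "W \<noteq> {0\<^sub>v n}" "W \<noteq> carrier_vec n"
        using less.prems False unfolding irr_rep_def by auto
      from rep_split[OF less.prems W] obtain r \<sigma> \<tau> where
        rs: "r < n" "n - r < n" "is_rep H r \<sigma>" "is_rep H (n - r) \<tau>"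
        "\<forall>h\<in>carrier H. mat_tr (\<rho> h) = mat_tr (\<sigma> h) + mat_tr (\<tau> h)" by blast
      obtain xs1 where x1: "\<forall>\<chi>\<in>set xs1. irr_char H \<chi>" "char_of H \<sigma> = (\<lambda>h. \<Sum>\<chi>\<leftarrow>xs1. \<chi> h)"
        using less.IH[OF rs(1) rs(3)] by blast
      obtain xs2 where x2: "\<forall>\<chi>\<in>set xs2. irr_char H \<chi>" "char_of H \<tau> = (\<lambda>h. \<Sum>\<chi>\<leftarrow>xs2. \<chi> h)"
        using less.IH[OF rs(2) rs(4)] by blast
      have "char_of H \<rho> = (\<lambda>h. char_of H \<sigma> h + char_of H \<tau> h)"
        using rs(5) unfolding char_of_def by auto
      then have "char_of H \<rho> = (\<lambda>h. \<Sum>\<chi>\<leftarrow>xs1 @ xs2. \<chi> h)" using x1 x2 by simp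
      then show ?thesis using x1 x2 by (intro exI[of _ "xs1 @ xs2"]) auto
    qed
  qed
qed


lemma mat_unit: fixes A :: "'k::field mat" assumes A: "A \<in> carrier_mat n p" and j: "j < p"
  shows "A *\<^sub>v unit_vec p j = col A j"
proof (intro eq_vecI)
  fix i assume i: "i < dim_vec (col A j)"
  then have i': "i < n" using A by auto
  have "(A *\<^sub>v unit_vec p j) $ i = (\<Sum>l<p. A $$ (i,l) * unit_vec p j $ l)"
    using multv_idx[OF A, of "unit_vec p j" i] i' by simp
  also have "\<dots> = (\<Sum>l<p. if l = j then A $$ (i,l) else 0)" using j by (intro sum.cong) auto
  finally show "(A *\<^sub>v unit_vec p j) $ i = col A j $ i" using j i' A by simp
qed (use A in auto)

lemma mat_eq_by_unit: fixes A :: "'k::field mat" assumes A: "A \<in> carrier_mat n p" and B: "B \<in> carrier_mat n p"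
  and eq: "\<And>v. v \<in> carrier_vec p \<Longrightarrow> A *\<^sub>v v = B *\<^sub>v v"
  shows "A = B"
proof (rule mat_col_eqI)
  fix j assume j: "j < dim_col B"
  then show "col A j = col B j" using mat_unit[OF A, of j] mat_unit[OF B, of j] eq[of "unit_vec p j"] B by auto
qed (use A B in auto)

lemma schur:
  fixes \<rho> \<sigma> :: "'g \<Rightarrow> 'k::field mat"
  assumes ir: "irr_rep H n \<rho>" and irs: "irr_rep H p \<sigma>" and A: "A \<in> carrier_mat n p"
    and comm: "\<And>h. h \<in> carrier H \<Longrightarrow> \<rho> h * A = A * \<sigma> h"
  shows "A = 0\<^sub>m n p \<or> char_of H \<rho> = char_of H \<sigma>"
proof -
  have rr: "is_rep H n \<rho>" and rs: "is_rep H p \<sigma>" using ir irs unfolding irr_rep_def by auto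
  have rhoc: "\<rho> h \<in> carrier_mat n n" if "h \<in> carrier H" for h using rr that unfolding is_rep_def by auto
  have sigc: "\<sigma> h \<in> carrier_mat p p" if "h \<in> carrier H" for h using rs that unfolding is_rep_def by auto
  define K where "K = {v \<in> carrier_vec p. A *\<^sub>v v = 0\<^sub>v n}"
  define I where "I = (\<lambda>v. A *\<^sub>v v) ` carrier_vec p"
  have Kinv: "rep_invariant_subspace H p \<sigma> K"
    unfolding rep_invariant_subspace_def K_def
  proof (intro conjI ballI allI)
    fix v w assume v: "v \<in> {v \<in> carrier_vec p. A *\<^sub>v v = 0\<^sub>v n}" and w: "w \<in> {v \<in> carrier_vec p. A *\<^sub>v v = 0\<^sub>v n}"
    then show "v + w \<in> {v \<in> carrier_vec p. A *\<^sub>v v = 0\<^sub>v n}" using A by (auto simp: mult_add_distrib_mat_vec)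
  next
    fix c v assume v: "v \<in> {v \<in> carrier_vec p. A *\<^sub>v v = 0\<^sub>v n}"
    then show "c \<cdot>\<^sub>v v \<in> {v \<in> carrier_vec p. A *\<^sub>v v = 0\<^sub>v n}" using A by (auto simp: mult_mat_vec)
  next
    fix h v assume h: "h \<in> carrier H" and v: "v \<in> {v \<in> carrier_vec p. A *\<^sub>v v = 0\<^sub>v n}"
    have "A *\<^sub>v (\<sigma> h *\<^sub>v v) = (A * \<sigma> h) *\<^sub>v v" using A sigc[OF h] v by auto
    also have "\<dots> = (\<rho> h * A) *\<^sub>v v" using comm[OF h] by simp
    also have "\<dots> = \<rho> h *\<^sub>v (A *\<^sub>v v)" using A rhoc[OF h] v by (intro assoc_mult_mat_vec) auto
    also have "\<dots> = \<rho> h *\<^sub>v 0\<^sub>v n" using v by simp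
    also have "\<dots> = 0\<^sub>v n" using rhoc[OF h] by (intro eq_vecI) (auto simp: scalar_prod_def)
    finally show "\<sigma> h *\<^sub>v v \<in> {v \<in> carrier_vec p. A *\<^sub>v v = 0\<^sub>v n}" using v rhoc[OF h] sigc[OF h] by auto
  qed (use A in auto)
  have Iinv: "rep_invariant_subspace H n \<rho> I"
    unfolding rep_invariant_subspace_def I_def
  proof (intro conjI ballI allI)
    show "(\<lambda>v. A *\<^sub>v v) ` carrier_vec p \<subseteq> carrier_vec n" using A by auto
    show "0\<^sub>v n \<in> (\<lambda>v. A *\<^sub>v v) ` carrier_vec p" using A by (intro image_eqI[of _ _ "0\<^sub>v p"]) auto
  next
    fix v w assume "v \<in> (\<lambda>v. A *\<^sub>v v) ` carrier_vec p" "w \<in> (\<lambda>v. A *\<^sub>v v) ` carrier_vec p"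
    then obtain v' w' where "v' \<in> carrier_vec p" "w' \<in> carrier_vec p" "v = A *\<^sub>v v'" "w = A *\<^sub>v w'" by auto
    then show "v + w \<in> (\<lambda>v. A *\<^sub>v v) ` carrier_vec p" using A by (intro image_eqI[of _ _ "v' + w'"]) (auto simp: mult_add_distrib_mat_vec)
  next
    fix c v assume "v \<in> (\<lambda>v. A *\<^sub>v v) ` carrier_vec p"
    then obtain v' where "v' \<in> carrier_vec p" "v = A *\<^sub>v v'" by auto
    then show "c \<cdot>\<^sub>v v \<in> (\<lambda>v. A *\<^sub>v v) ` carrier_vec p" using A by (intro image_eqI[of _ _ "c \<cdot>\<^sub>v v'"]) (auto simp: mult_mat_vec)
  next
    fix h v assume h: "h \<in> carrier H" and "v \<in> (\<lambda>v. A *\<^sub>v v) ` carrier_vec p"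
    then obtain v' where v': "v' \<in> carrier_vec p" "v = A *\<^sub>v v'" by auto
    have "\<rho> h *\<^sub>v v = (\<rho> h * A) *\<^sub>v v'" using v' A rhoc[OF h] by auto
    also have "\<dots> = A *\<^sub>v (\<sigma> h *\<^sub>v v')" using comm[OF h] A sigc[OF h] v' by auto
    finally show "\<rho> h *\<^sub>v v \<in> (\<lambda>v. A *\<^sub>v v) ` carrier_vec p" using v' sigc[OF h] by auto
  qed
  have Kc: "K = {0\<^sub>v p} \<or> K = carrier_vec p" using irs Kinv unfolding irr_rep_def by auto
  have Ic: "I = {0\<^sub>v n} \<or> I = carrier_vec n" using ir Iinv unfolding irr_rep_def by auto
  show ?thesis
  proof (cases "K = carrier_vec p \<or> I = {0\<^sub>v n}")
    case True
    have "A = 0\<^sub>m n p"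
    proof (rule mat_eq_by_unit[OF A])
      fix v :: "'k vec" assume v: "v \<in> carrier_vec p"
      have "A *\<^sub>v v = 0\<^sub>v n" using True v unfolding K_def I_def by auto
      then show "A *\<^sub>v v = 0\<^sub>m n p *\<^sub>v v" using v by auto
    qed auto
    then show ?thesis by simp
  next
    case False
    then have K0: "K = {0\<^sub>v p}" and In: "I = carrier_vec n" using Kc Ic by auto
    have "\<forall>i\<in>{..<n}. \<exists>v. v \<in> carrier_vec p \<and> A *\<^sub>v v = unit_vec n i"
    proof
      fix i assume "i \<in> {..<n}"
      have "unit_vec n i \<in> I" using In by simp
      then show "\<exists>v. v \<in> carrier_vec p \<and> A *\<^sub>v v = unit_vec n i" unfolding I_def by auto
    qed
    then have "\<exists>vv. \<forall>i\<in>{..<n}. vv i \<in> carrier_vec p \<and> A *\<^sub>v vv i = unit_vec n i" by (rule bchoice)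
    then obtain vv where vv0: "\<forall>i\<in>{..<n}. vv i \<in> carrier_vec p \<and> A *\<^sub>v vv i = unit_vec n i"
      by (elim exE)
    then have vv: "\<And>i. i < n \<Longrightarrow> vv i \<in> carrier_vec p \<and> A *\<^sub>v vv i = unit_vec n i" by auto
    define B where "B = mat p n (\<lambda>(k,i). vv i $ k)"
    have Bc: "B \<in> carrier_mat p n" unfolding B_def by auto
    have colB: "col B i = vv i" if "i < n" for i unfolding B_def using vv[OF that] that by (intro eq_vecI) auto
    have AB: "A * B = 1\<^sub>m n"
    proof (rule mat_col_eqI)
      fix i assume "i < dim_col (1\<^sub>m n :: 'k mat)"
      then have i: "i < n" by auto
      have "col (A * B) i = A *\<^sub>v vv i" using col_mult2[OF A Bc i] colB[OF i] by simp
      also have "\<dots> = unit_vec n i" using vv[OF i] by simp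
      finally show "col (A * B) i = col (1\<^sub>m n) i" using i by simp
    qed (use A Bc in auto)
    have BA: "B * A = 1\<^sub>m p"
    proof (rule mat_eq_by_unit)
      fix v :: "'k vec" assume v: "v \<in> carrier_vec p"
      have "A *\<^sub>v ((B * A) *\<^sub>v v) = (A * B) *\<^sub>v (A *\<^sub>v v)"
        using assoc_mult_mat_vec[OF Bc A v] assoc_mult_mat_vec[OF A Bc, of "A *\<^sub>v v"] A v by simp
      also have "\<dots> = A *\<^sub>v v" using AB A v by auto
      finally have e: "A *\<^sub>v ((B * A) *\<^sub>v v) = A *\<^sub>v v" .
      have "A *\<^sub>v ((B * A) *\<^sub>v v - v) = A *\<^sub>v ((B * A) *\<^sub>v v) - A *\<^sub>v v"
        using A Bc v by (intro mult_minus_distrib_mat_vec[of _ n p]) auto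
      also have "\<dots> = 0\<^sub>v n" unfolding e using A v by auto
      finally have "(B * A) *\<^sub>v v - v \<in> K" unfolding K_def using A Bc v by auto
      then have z: "(B * A) *\<^sub>v v - v = 0\<^sub>v p" using K0 by auto
      have "(B * A) *\<^sub>v v = v"
      proof (intro eq_vecI)
        fix i assume i: "i < dim_vec v"
        have "((B * A) *\<^sub>v v - v) $ i = 0" using z i v by simp
        then show "((B * A) *\<^sub>v v) $ i = v $ i" using i v Bc A by simp
      qed (use A Bc v in auto)
      then show "(B * A) *\<^sub>v v = 1\<^sub>m p *\<^sub>v v" using v by auto
    qed (use A Bc in auto)
    have "mat_tr (\<rho> h) = mat_tr (\<sigma> h)" if h: "h \<in> carrier H" for h
    proof -
      have m1: "\<rho> h * (A * B) = (\<rho> h * A) * B" using A Bc rhoc[OF h] by (simp add: assoc_mult_mat[of _ n n _ p _ n])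
      have m2: "(A * \<sigma> h) * B = A * (\<sigma> h * B)" using A Bc sigc[OF h] by (simp add: assoc_mult_mat[of _ n p _ p _ n])
      have "mat_tr (\<rho> h) = mat_tr (\<rho> h * (A * B))" using AB rhoc[OF h] by simp
      also have "\<dots> = mat_tr (A * (\<sigma> h * B))" unfolding m1 comm[OF h] m2 ..
      also have "\<dots> = mat_tr ((\<sigma> h * B) * A)" using A Bc sigc[OF h] by (intro mat_tr_comm[of _ n p]) auto
      also have "\<dots> = mat_tr (\<sigma> h)" using BA A Bc sigc[OF h] by (simp add: assoc_mult_mat[of _ p p _ n _ p])
      finally show ?thesis .
    qed
    then have "char_of H \<rho> = char_of H \<sigma>" unfolding char_of_def by auto
    then show ?thesis by simp
  qed
qed


definition ip :: "('g, 'b) monoid_scheme \<Rightarrow> ('g \<Rightarrow> 'k::field) \<Rightarrow> ('g \<Rightarrow> 'k) \<Rightarrow> 'k" where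
  "ip H f g = (\<Sum>h\<in>carrier H. f h * g (inv\<^bsub>H\<^esub> h)) / of_nat (card (carrier H))"

lemma (in group) sum_mult_reindex:
  assumes "g \<in> carrier G"
  shows "(\<Sum>h\<in>carrier G. F (g \<otimes> h) (inv h)) = (\<Sum>h\<in>carrier G. F h (inv h \<otimes> g))"
proof (rule sum.reindex_bij_witness[of _ "\<lambda>h. inv g \<otimes> h" "\<lambda>h. g \<otimes> h"])
  fix a assume a: "a \<in> carrier G"
  show "inv g \<otimes> (g \<otimes> a) = a" using a assms by (simp add: m_assoc[symmetric])
  show "g \<otimes> a \<in> carrier G" using a assms by simp
  show "g \<otimes> (inv g \<otimes> a) = a" using a assms by (simp add: m_assoc[symmetric])
  show "inv g \<otimes> a \<in> carrier G" using a assms by simp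
  show "F (g \<otimes> a) (inv (g \<otimes> a) \<otimes> g) = F (g \<otimes> a) (inv a)"
    using a assms by (simp add: m_assoc inv_mult_group)
qed

lemma rep_carrier: "is_rep H n \<rho> \<Longrightarrow> h \<in> carrier H \<Longrightarrow> \<rho> h \<in> carrier_mat n n"
  unfolding is_rep_def by auto

lemma rep_mult: "is_rep H n \<rho> \<Longrightarrow> g \<in> carrier H \<Longrightarrow> h \<in> carrier H \<Longrightarrow> \<rho> (g \<otimes>\<^bsub>H\<^esub> h) = \<rho> g * \<rho> h"
  unfolding is_rep_def by auto

lemma rep_one: "is_rep H n \<rho> \<Longrightarrow> \<rho> \<one>\<^bsub>H\<^esub> = 1\<^sub>m n"
  unfolding is_rep_def by auto

lemma avg_comm:
  fixes \<rho> \<sigma> :: "'g \<Rightarrow> 'k::field mat"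
  fixes j k :: nat
  assumes H: "group H" and r: "is_rep H n \<rho>" and s: "is_rep H p \<sigma>" and g: "g \<in> carrier H"
  defines "A \<equiv> mat n p (\<lambda>(i,l). \<Sum>h\<in>carrier H. \<rho> h $$ (i,j) * \<sigma> (inv\<^bsub>H\<^esub> h) $$ (k,l))"
  assumes j: "j < n" and k: "k < p"
  shows "\<rho> g * A = A * \<sigma> g"
proof (intro eq_matI)
  have Ac: "A \<in> carrier_mat n p" unfolding A_def by auto
  fix i l assume il: "i < dim_row (A * \<sigma> g)" "l < dim_col (A * \<sigma> g)"
  then have i: "i < n" and l: "l < p" using Ac rep_carrier[OF s g] by auto
  have "(\<rho> g * A) $$ (i,l) = (\<Sum>m<n. \<rho> g $$ (i,m) * A $$ (m,l))"
    using mult_idx[OF rep_carrier[OF r g] Ac i l] .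
  also have "\<dots> = (\<Sum>m<n. \<Sum>h\<in>carrier H. \<rho> g $$ (i,m) * (\<rho> h $$ (m,j) * \<sigma> (inv\<^bsub>H\<^esub> h) $$ (k,l)))"
    unfolding A_def using l by (auto simp: sum_distrib_left intro!: sum.cong)
  also have "\<dots> = (\<Sum>h\<in>carrier H. (\<Sum>m<n. \<rho> g $$ (i,m) * \<rho> h $$ (m,j)) * \<sigma> (inv\<^bsub>H\<^esub> h) $$ (k,l))"
    by (subst sum.swap) (simp add: sum_distrib_right mult.assoc)
  also have "\<dots> = (\<Sum>h\<in>carrier H. \<rho> (g \<otimes>\<^bsub>H\<^esub> h) $$ (i,j) * \<sigma> (inv\<^bsub>H\<^esub> h) $$ (k,l))"
    using i j g by (intro sum.cong refl) (simp add: rep_mult[OF r] mult_idx[OF rep_carrier[OF r g] rep_carrier[OF r]])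
  also have "\<dots> = (\<Sum>h\<in>carrier H. \<rho> h $$ (i,j) * \<sigma> (inv\<^bsub>H\<^esub> h \<otimes>\<^bsub>H\<^esub> g) $$ (k,l))"
    using group.sum_mult_reindex[OF H g, of "\<lambda>a b. \<rho> a $$ (i,j) * \<sigma> b $$ (k,l)"] by simp
  also have "\<dots> = (\<Sum>h\<in>carrier H. \<rho> h $$ (i,j) * (\<Sum>m<p. \<sigma> (inv\<^bsub>H\<^esub> h) $$ (k,m) * \<sigma> g $$ (m,l)))"
    using k l g by (intro sum.cong refl) (simp add: rep_mult[OF s] mult_idx[OF rep_carrier[OF s] rep_carrier[OF s g]] group.inv_closed[OF H])
  also have "\<dots> = (\<Sum>m<p. (\<Sum>h\<in>carrier H. \<rho> h $$ (i,j) * \<sigma> (inv\<^bsub>H\<^esub> h) $$ (k,m)) * \<sigma> g $$ (m,l))"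
    unfolding sum_distrib_left sum_distrib_right by (subst sum.swap) (simp add: mult.assoc)
  also have "\<dots> = (\<Sum>m<p. A $$ (i,m) * \<sigma> g $$ (m,l))"
    unfolding A_def using i by (auto intro!: sum.cong)
  also have "\<dots> = (A * \<sigma> g) $$ (i,l)" using mult_idx[OF Ac rep_carrier[OF s g] i l] by simp
  finally show "(\<rho> g * A) $$ (i,l) = (A * \<sigma> g) $$ (i,l)" .
qed (use rep_carrier[OF r g] rep_carrier[OF s g] in \<open>auto simp: A_def\<close>)


lemma mat_tr_sum: "M \<in> carrier_mat n n \<Longrightarrow> mat_tr M = (\<Sum>i<n. M $$ (i,i))"
  unfolding mat_tr_def by auto

lemma orth_entries_distinct:
  fixes \<rho> \<sigma> :: "'g \<Rightarrow> 'k::field mat"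
  assumes H: "group H" and ir: "irr_rep H n \<rho>" and irs: "irr_rep H p \<sigma>"
    and ne: "char_of H \<rho> \<noteq> char_of H \<sigma>" and i: "i < n" and l: "l < p" and that: "a < n" "b < p"
  shows "(\<Sum>h\<in>carrier H. \<rho> h $$ (a,i) * \<sigma> (inv\<^bsub>H\<^esub> h) $$ (l,b)) = 0"
proof -
  have r: "is_rep H n \<rho>" and s: "is_rep H p \<sigma>" using ir irs unfolding irr_rep_def by auto
  define A where "A = mat n p (\<lambda>(a,b). \<Sum>h\<in>carrier H. \<rho> h $$ (a,i) * \<sigma> (inv\<^bsub>H\<^esub> h) $$ (l,b))"
  have Ac: "A \<in> carrier_mat n p" unfolding A_def by auto
  have "\<rho> h * A = A * \<sigma> h" if "h \<in> carrier H" for h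
    unfolding A_def by (rule avg_comm[OF H r s that i l])
  then have "A = 0\<^sub>m n p" using schur[OF ir irs Ac] ne by auto
  then have "A $$ (a,b) = 0" using that by simp
  then show ?thesis unfolding A_def using that by simp
qed

lemma orth_distinct:
  fixes \<rho> \<sigma> :: "'g \<Rightarrow> 'k::field mat"
  assumes H: "group H" and ir: "irr_rep H n \<rho>" and irs: "irr_rep H p \<sigma>"
    and ne: "char_of H \<rho> \<noteq> char_of H \<sigma>"
  shows "(\<Sum>h\<in>carrier H. mat_tr (\<rho> h) * mat_tr (\<sigma> (inv\<^bsub>H\<^esub> h))) = 0"
proof -
  have r: "is_rep H n \<rho>" and s: "is_rep H p \<sigma>" using ir irs unfolding irr_rep_def by auto
  have "(\<Sum>h\<in>carrier H. mat_tr (\<rho> h) * mat_tr (\<sigma> (inv\<^bsub>H\<^esub> h)))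
      = (\<Sum>h\<in>carrier H. \<Sum>i<n. \<Sum>l<p. \<rho> h $$ (i,i) * \<sigma> (inv\<^bsub>H\<^esub> h) $$ (l,l))"
    by (intro sum.cong refl) (simp add: mat_tr_sum[OF rep_carrier[OF r]] mat_tr_sum[OF rep_carrier[OF s]]
         group.inv_closed[OF H] sum_product)
  also have "\<dots> = (\<Sum>i<n. \<Sum>l<p. \<Sum>h\<in>carrier H. \<rho> h $$ (i,i) * \<sigma> (inv\<^bsub>H\<^esub> h) $$ (l,l))"
    by (subst sum.swap) (simp add: sum.swap[of _ "carrier H"])
  also have "\<dots> = 0"
    by (rule sum.neutral, rule ballI, rule sum.neutral, rule ballI) (auto intro: orth_entries_distinct[OF H ir irs ne])
  finally show ?thesis .
qed

lemma orth_same: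
  fixes \<rho> :: "'g \<Rightarrow> 'k::field_char_0 mat"
  assumes H: "group H" and fin: "finite (carrier H)" and spl: "splitting_field TYPE('k) H"
    and ir: "irr_rep H n \<rho>"
  shows "(\<Sum>h\<in>carrier H. mat_tr (\<rho> h) * mat_tr (\<rho> (inv\<^bsub>H\<^esub> h))) = of_nat (card (carrier H))"
proof -
  have r: "is_rep H n \<rho>" and n0: "n > 0" using ir unfolding irr_rep_def by auto
  have entry: "(\<Sum>h\<in>carrier H. \<rho> h $$ (i,i) * \<rho> (inv\<^bsub>H\<^esub> h) $$ (l,l)) = (if i = l then of_nat (card (carrier H)) / of_nat n else 0)"
    if i: "i < n" and l: "l < n" for i l
  proof -
    define A where "A = mat n n (\<lambda>(a,b). \<Sum>h\<in>carrier H. \<rho> h $$ (a,i) * \<rho> (inv\<^bsub>H\<^esub> h) $$ (l,b))"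
    have Ac: "A \<in> carrier_mat n n" unfolding A_def by auto
    have "\<rho> h * A = A * \<rho> h" if "h \<in> carrier H" for h
      unfolding A_def by (rule avg_comm[OF H r r that i l])
    then obtain c where c: "A = c \<cdot>\<^sub>m 1\<^sub>m n" using spl ir Ac unfolding splitting_field_def by metis
    have "mat_tr A = (\<Sum>a<n. A $$ (a,a))" by (rule mat_tr_sum[OF Ac])
    also have "\<dots> = (\<Sum>a<n. \<Sum>h\<in>carrier H. \<rho> (inv\<^bsub>H\<^esub> h) $$ (l,a) * \<rho> h $$ (a,i))"
      unfolding A_def by (intro sum.cong refl) (auto simp: mult.commute)
    also have "\<dots> = (\<Sum>h\<in>carrier H. (\<rho> (inv\<^bsub>H\<^esub> h) * \<rho> h) $$ (l,i))"
      by (subst sum.swap) (intro sum.cong refl, simp add: mult_idx[OF rep_carrier[OF r] rep_carrier[OF r] l i] group.inv_closed[OF H])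
    also have "\<dots> = (\<Sum>h\<in>carrier H. (1\<^sub>m n) $$ (l,i))"
      by (intro sum.cong refl) (simp add: rep_mult[OF r, symmetric] group.inv_closed[OF H] group.l_inv[OF H] rep_one[OF r])
    also have "\<dots> = of_nat (card (carrier H)) * (if l = i then 1 else 0)" using l i by simp
    finally have trA: "mat_tr A = of_nat (card (carrier H)) * (if l = i then 1 else 0)" .
    have "mat_tr A = of_nat n * c" unfolding c mat_tr_sum[OF smult_carrier_mat[OF one_carrier_mat]] by simp
    then have cval: "c = of_nat (card (carrier H)) * (if l = i then 1 else 0) / of_nat n" using trA n0 by (simp add: field_simps)
    have "A $$ (i,l) = (if i = l then c else 0)" unfolding c using i l by simp
    then show ?thesis unfolding A_def cval using i l by auto
  qed
  have "(\<Sum>h\<in>carrier H. mat_tr (\<rho> h) * mat_tr (\<rho> (inv\<^bsub>H\<^esub> h)))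
      = (\<Sum>h\<in>carrier H. \<Sum>i<n. \<Sum>l<n. \<rho> h $$ (i,i) * \<rho> (inv\<^bsub>H\<^esub> h) $$ (l,l))"
    by (intro sum.cong refl) (simp add: mat_tr_sum[OF rep_carrier[OF r]]
         group.inv_closed[OF H] sum_product)
  also have "\<dots> = (\<Sum>i<n. \<Sum>l<n. \<Sum>h\<in>carrier H. \<rho> h $$ (i,i) * \<rho> (inv\<^bsub>H\<^esub> h) $$ (l,l))"
    by (subst sum.swap) (simp add: sum.swap[of _ "carrier H"])
  also have "\<dots> = (\<Sum>i<n. \<Sum>l<n. if i = l then of_nat (card (carrier H)) / of_nat n else 0)"
    by (intro sum.cong refl) (simp add: entry)
  also have "\<dots> = of_nat n * (of_nat (card (carrier H)) / of_nat n)" by simp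
  also have "\<dots> = of_nat (card (carrier H))" using n0 by simp
  finally show ?thesis .
qed

lemma orth:
  fixes \<chi> \<chi>' :: "'g \<Rightarrow> 'k::field_char_0"
  assumes H: "group H" and fin: "finite (carrier H)" and spl: "splitting_field TYPE('k) H"
    and c1: "irr_char H \<chi>" and c2: "irr_char H \<chi>'"
  shows "ip H \<chi> \<chi>' = (if \<chi> = \<chi>' then 1 else 0)"
proof -
  obtain n \<rho> where ir: "irr_rep H n \<rho>" and \<chi>: "\<chi> = char_of H \<rho>" using c1 unfolding irr_char_def by auto
  obtain p \<sigma> where irs: "irr_rep H p \<sigma>" and \<chi>': "\<chi>' = char_of H \<sigma>" using c2 unfolding irr_char_def by auto
  have cne: "card (carrier H) \<noteq> 0" using fin
    by (metis H card_0_eq empty_iff group.is_monoid monoid.one_closed)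
  have e: "(\<Sum>h\<in>carrier H. \<chi> h * \<chi>' (inv\<^bsub>H\<^esub> h)) = (\<Sum>h\<in>carrier H. mat_tr (\<rho> h) * mat_tr (\<sigma> (inv\<^bsub>H\<^esub> h)))"
    unfolding \<chi> \<chi>' char_of_def by (intro sum.cong refl) (simp add: group.inv_closed[OF H])
  show ?thesis
  proof (cases "\<chi> = \<chi>'")
    case True
    have e2: "(\<Sum>h\<in>carrier H. \<chi> h * \<chi>' (inv\<^bsub>H\<^esub> h)) = (\<Sum>h\<in>carrier H. mat_tr (\<rho> h) * mat_tr (\<rho> (inv\<^bsub>H\<^esub> h)))"
      unfolding True[symmetric] \<chi> char_of_def by (intro sum.cong refl) (simp add: group.inv_closed[OF H])
    show ?thesis unfolding ip_def e2 orth_same[OF H fin spl ir] using True cne by simp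
  next
    case False
    then show ?thesis unfolding ip_def e orth_distinct[OF H ir irs False[unfolded \<chi> \<chi>']] by simp
  qed
qed


lemma char_class:
  assumes H: "group H" and r: "is_rep H n \<rho>" and x: "x \<in> carrier H" and g: "g \<in> carrier H"
  shows "char_of H \<rho> (inv\<^bsub>H\<^esub> g \<otimes>\<^bsub>H\<^esub> x \<otimes>\<^bsub>H\<^esub> g) = char_of H \<rho> x"
proof -
  interpret group H by fact
  have c: "inv\<^bsub>H\<^esub> g \<otimes>\<^bsub>H\<^esub> x \<otimes>\<^bsub>H\<^esub> g \<in> carrier H" using x g by simp
  have "\<rho> (inv\<^bsub>H\<^esub> g \<otimes>\<^bsub>H\<^esub> x \<otimes>\<^bsub>H\<^esub> g) = \<rho> (inv\<^bsub>H\<^esub> g) * (\<rho> x * \<rho> g)"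
    using x g by (simp add: rep_mult[OF r] rep_carrier[OF r] assoc_mult_mat[of _ n n _ n _ n])
  then have "mat_tr (\<rho> (inv\<^bsub>H\<^esub> g \<otimes>\<^bsub>H\<^esub> x \<otimes>\<^bsub>H\<^esub> g)) = mat_tr ((\<rho> x * \<rho> g) * \<rho> (inv\<^bsub>H\<^esub> g))"
    using mat_tr_comm[OF rep_carrier[OF r inv_closed[OF g]] mult_carrier_mat[OF rep_carrier[OF r x] rep_carrier[OF r g]]] by simp
  also have "(\<rho> x * \<rho> g) * \<rho> (inv\<^bsub>H\<^esub> g) = \<rho> (x \<otimes>\<^bsub>H\<^esub> g \<otimes>\<^bsub>H\<^esub> inv\<^bsub>H\<^esub> g)"
    using x g by (simp add: rep_mult[OF r])
  also have "x \<otimes>\<^bsub>H\<^esub> g \<otimes>\<^bsub>H\<^esub> inv\<^bsub>H\<^esub> g = x" using x g by (simp add: m_assoc)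
  finally show ?thesis unfolding char_of_def using c x by simp
qed

locale clif = group +
  fixes N :: "'a set" and \<eta> :: "'a \<Rightarrow> 'k::field_char_0"
  assumes fin: "finite (carrier G)"
    and spl: "\<And>H. subgroup H G \<Longrightarrow> splitting_field TYPE('k) (G\<lparr>carrier := H\<rparr>)"
    and nrm: "N \<lhd> G" and der: "derived G (carrier G) \<subseteq> N"
    and eta: "irr_char (G\<lparr>carrier := N\<rparr>) \<eta>"
begin

abbreviation "K \<equiv> inertia G N \<eta>"
abbreviation "HK \<equiv> G\<lparr>carrier := K\<rparr>"
abbreviation "HN \<equiv> G\<lparr>carrier := N\<rparr>"
abbreviation "Q \<equiv> HK Mod N"

lemma N_sub: "subgroup N G" using nrm by (simp add: normal_def)
lemma N_car: "N \<subseteq> carrier G" using N_sub subgroup.subset by blast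
lemma HN_grp: "group HN" using subgroup_imp_group[OF N_sub] .
lemma conj_N: "x \<in> carrier G \<Longrightarrow> h \<in> N \<Longrightarrow> inv x \<otimes> h \<otimes> x \<in> N"
  using normal.inv_op_closed1[OF nrm] by blast
lemma conj_N_iff: assumes "x \<in> carrier G" "g \<in> carrier G" shows "inv x \<otimes> g \<otimes> x \<in> N \<longleftrightarrow> g \<in> N"
proof
  assume "inv x \<otimes> g \<otimes> x \<in> N"
  then have "x \<otimes> (inv x \<otimes> g \<otimes> x) \<otimes> inv x \<in> N" using normal.inv_op_closed2[OF nrm] assms by blast
  also have "x \<otimes> (inv x \<otimes> g \<otimes> x) \<otimes> inv x = g" using assms by (simp add: m_assoc[symmetric] ) (simp add: m_assoc)
  finally show "g \<in> N" .
qed (use conj_N assms in auto)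

lemma eta_class: assumes "n \<in> N" "x \<in> N" shows "\<eta> (inv n \<otimes> x \<otimes> n) = \<eta> x"
proof -
  obtain d \<rho> where ir: "irr_rep HN d \<rho>" and e: "\<eta> = char_of HN \<rho>" using eta unfolding irr_char_def by auto
  have r: "is_rep HN d \<rho>" using ir unfolding irr_rep_def by auto
  have "char_of HN \<rho> (inv\<^bsub>HN\<^esub> n \<otimes>\<^bsub>HN\<^esub> x \<otimes>\<^bsub>HN\<^esub> n) = char_of HN \<rho> x"
    using char_class[OF HN_grp r] assms by simp
  then show ?thesis using assms N_sub e by simp
qed

lemma K_sub: "subgroup K G"
proof (rule subgroupI)
  show "K \<subseteq> carrier G" unfolding inertia_def by auto
  show "K \<noteq> {}"
  proof -
    have "\<one> \<in> K" unfolding inertia_def using N_car by auto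
    then show ?thesis by auto
  qed
next
  fix a assume a: "a \<in> K"
  then have ac: "a \<in> carrier G" and ak: "\<And>x. x \<in> N \<Longrightarrow> \<eta> (inv a \<otimes> x \<otimes> a) = \<eta> x" unfolding inertia_def by auto
  have "\<eta> (inv (inv a) \<otimes> x \<otimes> inv a) = \<eta> x" if x: "x \<in> N" for x
  proof -
    have xc: "x \<in> carrier G" using x N_car by auto
    have y: "a \<otimes> x \<otimes> inv a \<in> N" using normal.inv_op_closed2[OF nrm] ac x by blast
    have "\<eta> (inv a \<otimes> (a \<otimes> x \<otimes> inv a) \<otimes> a) = \<eta> (a \<otimes> x \<otimes> inv a)" using ak[OF y] .
    moreover have "inv a \<otimes> (a \<otimes> x \<otimes> inv a) \<otimes> a = x" using ac xc by (simp add: m_assoc[symmetric]) (simp add: m_assoc)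
    ultimately show ?thesis using ac by simp
  qed
  then show "inv a \<in> K" using ac unfolding inertia_def by auto
next
  fix a b assume a: "a \<in> K" and b: "b \<in> K"
  then have ac: "a \<in> carrier G" and ak: "\<And>x. x \<in> N \<Longrightarrow> \<eta> (inv a \<otimes> x \<otimes> a) = \<eta> x"
    and bc: "b \<in> carrier G" and bk: "\<And>x. x \<in> N \<Longrightarrow> \<eta> (inv b \<otimes> x \<otimes> b) = \<eta> x" unfolding inertia_def by auto
  have "\<eta> (inv (a \<otimes> b) \<otimes> x \<otimes> (a \<otimes> b)) = \<eta> x" if x: "x \<in> N" for x
  proof -
    have y: "inv a \<otimes> x \<otimes> a \<in> N" using conj_N ac x by blast
    have "inv (a \<otimes> b) \<otimes> x \<otimes> (a \<otimes> b) = inv b \<otimes> (inv a \<otimes> x \<otimes> a) \<otimes> b"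
      using ac bc x N_car by (simp add: inv_mult_group m_assoc subsetD)
    then show ?thesis using bk[OF y] ak[OF x] by simp
  qed
  then show "a \<otimes> b \<in> K" using ac bc unfolding inertia_def by auto
qed

lemma K_car: "K \<subseteq> carrier G" using K_sub subgroup.subset by blast
lemma HK_grp: "group HK" using subgroup_imp_group[OF K_sub] .
lemma N_K: "N \<subseteq> K" unfolding inertia_def using N_car eta_class by auto
lemma N_nrm_K: "N \<lhd> HK" using normal_restrict_supergroup[OF K_sub nrm N_K] .
lemma N_sub_K: "subgroup N HK" using N_nrm_K by (simp add: normal_def)
lemma fin_K: "finite K" using fin K_car finite_subset by blast
lemma fin_N: "finite N" using fin N_car finite_subset by blast
lemma spl_K: "splitting_field TYPE('k) HK" using spl[OF K_sub] .
lemma spl_N: "splitting_field TYPE('k) HN" using spl[OF N_sub] .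
lemma Q_grp: "group Q" using normal.factorgroup_is_group[OF N_nrm_K] .
lemma invK[simp]: "x \<in> K \<Longrightarrow> inv\<^bsub>HK\<^esub> x = inv x" using K_sub by simp
lemma invN[simp]: "x \<in> N \<Longrightarrow> inv\<^bsub>HN\<^esub> x = inv x" using N_sub by simp
lemma rcosK[simp]: "N #>\<^bsub>HK\<^esub> a = N #> a" unfolding r_coset_def by simp
lemma carrier_Q: "carrier Q = (\<lambda>a. N #> a) ` K"
  by (simp add: carrier_FactGroup)
lemma mult_Q: "a \<in> K \<Longrightarrow> b \<in> K \<Longrightarrow> (N #> a) \<otimes>\<^bsub>Q\<^esub> (N #> b) = N #> (a \<otimes> b)"
  using normal.rcos_sum[OF N_nrm_K, of a b] by simp
lemma one_Q: "\<one>\<^bsub>Q\<^esub> = N" by simp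
lemma rcos_N_iff: assumes "g \<in> K" shows "N #> g = N \<longleftrightarrow> g \<in> N"
proof
  assume "N #> g = N"
  then have "g \<in> N #> g" using group.rcos_self[OF HK_grp, of g N] N_sub_K assms by simp
  then show "g \<in> N" using \<open>N #> g = N\<close> by simp
next
  assume "g \<in> N" then show "N #> g = N" using subgroup.rcos_const[OF N_sub is_group] by simp
qed
lemma card_Q: "card (carrier Q) * card N = card K"
  using group.lagrange[OF HK_grp N_sub_K] unfolding order_def FactGroup_def by simp

lemma comm_Q: assumes "a \<in> K" "b \<in> K" shows "N #> (a \<otimes> b) = N #> (b \<otimes> a)"
proof -
  have ac: "a \<in> carrier G" and bc: "b \<in> carrier G" using assms K_car by auto
  have "a \<otimes> b \<otimes> inv a \<otimes> inv b \<in> derived_set G (carrier G)"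
    by (rule UN_I[OF ac], rule UN_I[OF bc]) simp
  then have "a \<otimes> b \<otimes> inv a \<otimes> inv b \<in> derived G (carrier G)" unfolding derived_def by (rule generate.incl)
  then have cN: "a \<otimes> b \<otimes> inv a \<otimes> inv b \<in> N" using der by (rule subsetD[rotated])
  have e: "(a \<otimes> b \<otimes> inv a \<otimes> inv b) \<otimes> (b \<otimes> a) = a \<otimes> b" using ac bc by (simp add: m_assoc[symmetric]) (simp add: m_assoc)
  have "(a \<otimes> b \<otimes> inv a \<otimes> inv b) \<otimes> (b \<otimes> a) \<in> N #> (b \<otimes> a)" using rcosI[OF cN N_car] ac bc by simp
  then have "a \<otimes> b \<in> N #> (b \<otimes> a)" unfolding e .
  then have "N #> (b \<otimes> a) = N #> (a \<otimes> b)" using repr_independence[of "a \<otimes> b" N "b \<otimes> a"] ac bc N_sub by simp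
  then show ?thesis by simp
qed

end


lemma (in group) reg_decomp:
  assumes fin: "finite (carrier G)"
  shows "\<exists>xs. (\<forall>\<chi>\<in>set xs. irr_char G (\<chi> :: 'a \<Rightarrow> 'k::field)) \<and>
    (\<forall>a\<in>carrier G. (\<Sum>\<chi>\<leftarrow>xs. \<chi> a) = (if a = \<one> then of_nat (card (carrier G)) else 0))"
proof -
  define q where "q = card (carrier G)"
  obtain e where e: "bij_betw e {0..<q} (carrier G)" using ex_bij_betw_nat_finite[OF fin] unfolding q_def by blast
  have ec: "e i \<in> carrier G" if "i < q" for i using e that unfolding bij_betw_def by auto
  have einj: "e i = e j \<longleftrightarrow> i = j" if "i < q" "j < q" for i j using e that unfolding bij_betw_def inj_on_def by auto
  have esurj: "\<exists>k<q. e k = x" if "x \<in> carrier G" for x using e that unfolding bij_betw_def by (metis atLeastLessThan_iff imageE)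
  define reg :: "'a \<Rightarrow> 'k mat" where "reg a = mat q q (\<lambda>(i,j). if a \<otimes> e j = e i then 1 else 0)" for a
  have regc: "reg a \<in> carrier_mat q q" for a unfolding reg_def by auto
  have regd[simp]: "dim_row (reg a) = q" "dim_col (reg a) = q" for a unfolding reg_def by auto
  have rep: "is_rep G q reg"
    unfolding is_rep_def
  proof (intro conjI ballI)
    fix a b assume a: "a \<in> carrier G" and b: "b \<in> carrier G"
    show "reg (a \<otimes> b) = reg a * reg b"
    proof (intro eq_matI)
      fix i j assume "i < dim_row (reg a * reg b)" "j < dim_col (reg a * reg b)"
      then have i: "i < q" and j: "j < q" using regc by auto
      obtain k0 where k0: "k0 < q" "e k0 = b \<otimes> e j" using esurj[of "b \<otimes> e j"] b ec[OF j] by auto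
      have "(reg a * reg b) $$ (i,j) = (\<Sum>k<q. reg a $$ (i,k) * reg b $$ (k,j))"
        using mult_idx[OF regc regc i j] .
      also have "\<dots> = (\<Sum>k<q. if k = k0 then (if a \<otimes> e k0 = e i then 1 else 0) else 0)"
      proof (intro sum.cong refl)
        fix k assume "k \<in> {..<q}"
        then have k: "k < q" by auto
        have "b \<otimes> e j = e k \<longleftrightarrow> k = k0" using k0 einj[OF k k0(1)] by auto
        then show "reg a $$ (i,k) * reg b $$ (k,j) = (if k = k0 then (if a \<otimes> e k0 = e i then 1 else 0) else 0)"
          unfolding reg_def using i j k by auto
      qed
      also have "\<dots> = (if a \<otimes> (b \<otimes> e j) = e i then 1 else 0)" using k0 by simp
      also have "\<dots> = reg (a \<otimes> b) $$ (i,j)" unfolding reg_def using i j a b ec[OF j] by (simp add: m_assoc)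
      finally show "reg (a \<otimes> b) $$ (i,j) = (reg a * reg b) $$ (i,j)" by simp
    qed (use regc in auto)
  next
    show "reg \<one> = 1\<^sub>m q" unfolding reg_def by (intro eq_matI) (auto simp: ec einj)
  qed (use regc in auto)
  obtain xs where xs: "\<forall>\<chi>\<in>set xs. irr_char G \<chi>" "char_of G reg = (\<lambda>h. \<Sum>\<chi>\<leftarrow>xs. \<chi> h)"
    using char_decomp[OF rep] by blast
  have "(\<Sum>\<chi>\<leftarrow>xs. \<chi> a) = (if a = \<one> then of_nat q else 0)" if a: "a \<in> carrier G" for a
  proof -
    have "(\<Sum>\<chi>\<leftarrow>xs. \<chi> a) = mat_tr (reg a)" using fun_cong[OF xs(2), of a] a unfolding char_of_def by simp
    also have "\<dots> = (\<Sum>i<q. reg a $$ (i,i))" by (rule mat_tr_sum[OF regc])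
    also have "\<dots> = (\<Sum>i<q. if a \<otimes> e i = e i then 1 else 0)" unfolding reg_def by (intro sum.cong refl) auto
    also have "\<dots> = (\<Sum>i<q. if a = \<one> then 1 else 0)" using a ec by (intro sum.cong refl) auto
    also have "\<dots> = (if a = \<one> then of_nat q else 0)" by simp
    finally show ?thesis .
  qed
  then show ?thesis using xs unfolding q_def by blast
qed


lemma smult_mat_vec: fixes A :: "'k::field mat" assumes A: "A \<in> carrier_mat n m" and v: "v \<in> carrier_vec m"
  shows "(c \<cdot>\<^sub>m A) *\<^sub>v v = c \<cdot>\<^sub>v (A *\<^sub>v v)"
proof (intro eq_vecI)
  fix i assume "i < dim_vec (c \<cdot>\<^sub>v (A *\<^sub>v v))"
  then have i: "i < n" using A by auto
  have "((c \<cdot>\<^sub>m A) *\<^sub>v v) $ i = (\<Sum>k<m. (c \<cdot>\<^sub>m A) $$ (i,k) * v $ k)"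
    using multv_idx[OF smult_carrier_mat[OF A] v i] .
  also have "\<dots> = (\<Sum>k<m. c * (A $$ (i,k) * v $ k))" using i A by (intro sum.cong refl) simp
  also have "\<dots> = c * (\<Sum>k<m. A $$ (i,k) * v $ k)" by (simp add: sum_distrib_left)
  also have "\<dots> = c * (A *\<^sub>v v) $ i" using multv_idx[OF A v i] by simp
  finally show "((c \<cdot>\<^sub>m A) *\<^sub>v v) $ i = (c \<cdot>\<^sub>v (A *\<^sub>v v)) $ i" using i A by simp
qed (use A v in auto)

lemma mat_tr_smult: fixes A :: "'k::field mat" assumes A: "A \<in> carrier_mat n n"
  shows "mat_tr (c \<cdot>\<^sub>m A) = c * mat_tr A"
proof -
  have "mat_tr (c \<cdot>\<^sub>m A) = (\<Sum>k<n. (c \<cdot>\<^sub>m A) $$ (k,k))" by (rule mat_tr_sum[OF smult_carrier_mat[OF A]])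
  also have "\<dots> = (\<Sum>k<n. c * A $$ (k,k))" using A by (intro sum.cong refl) simp
  also have "\<dots> = c * mat_tr A" unfolding mat_tr_sum[OF A] by (simp add: sum_distrib_left)
  finally show ?thesis .
qed

lemma smult_mult_mat: fixes A :: "'k::field mat" assumes A: "A \<in> carrier_mat n m" and B: "B \<in> carrier_mat m p"
  shows "(c \<cdot>\<^sub>m A) * (d \<cdot>\<^sub>m B) = (c * d) \<cdot>\<^sub>m (A * B)"
proof (intro eq_matI)
  fix i j assume "i < dim_row ((c * d) \<cdot>\<^sub>m (A * B))" "j < dim_col ((c * d) \<cdot>\<^sub>m (A * B))"
  then have i: "i < n" and j: "j < p" using A B by auto
  have "((c \<cdot>\<^sub>m A) * (d \<cdot>\<^sub>m B)) $$ (i,j) = (\<Sum>k<m. (c \<cdot>\<^sub>m A) $$ (i,k) * (d \<cdot>\<^sub>m B) $$ (k,j))"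
    using mult_idx[OF smult_carrier_mat[OF A] smult_carrier_mat[OF B] i j] .
  also have "\<dots> = (\<Sum>k<m. (c * d) * (A $$ (i,k) * B $$ (k,j)))" using i j A B
    by (intro sum.cong refl) (simp add: ac_simps)
  also have "\<dots> = (c * d) * (\<Sum>k<m. A $$ (i,k) * B $$ (k,j))" by (simp add: sum_distrib_left)
  also have "\<dots> = ((c * d) \<cdot>\<^sub>m (A * B)) $$ (i,j)" using mult_idx[OF A B i j] i j A B by simp
  finally show "((c \<cdot>\<^sub>m A) * (d \<cdot>\<^sub>m B)) $$ (i,j) = ((c * d) \<cdot>\<^sub>m (A * B)) $$ (i,j)" .
qed (use A B in auto)

context clif
begin

lemma Q_abel: assumes "a \<in> carrier Q" "b \<in> carrier Q" shows "a \<otimes>\<^bsub>Q\<^esub> b = b \<otimes>\<^bsub>Q\<^esub> a"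
proof -
  obtain x y where "x \<in> K" "y \<in> K" "a = N #> x" "b = N #> y" using assms carrier_Q by auto
  then show ?thesis using mult_Q comm_Q by simp
qed

lemma NgQ: "g \<in> K \<Longrightarrow> N #> g \<in> carrier Q" using carrier_Q by auto

lemma inflate_rep:
  fixes w :: "'a set \<Rightarrow> 'k mat"
  assumes ir: "irr_rep Q d w"
  shows "irr_rep HK d (\<lambda>g. w (N #> g))"
proof -
  have r: "is_rep Q d w" using ir unfolding irr_rep_def by auto
  have rep: "is_rep HK d (\<lambda>g. w (N #> g))"
    unfolding is_rep_def
  proof (intro conjI ballI)
    fix g assume "g \<in> carrier HK" then show "w (N #> g) \<in> carrier_mat d d" using rep_carrier[OF r NgQ] by simp
  next
    fix g h assume "g \<in> carrier HK" "h \<in> carrier HK"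
    then have g: "g \<in> K" and h: "h \<in> K" by auto
    show "w (N #> (g \<otimes>\<^bsub>HK\<^esub> h)) = w (N #> g) * w (N #> h)"
      using rep_mult[OF r NgQ[OF g] NgQ[OF h]] mult_Q[OF g h] by simp
  next
    have "N #> \<one> = N" using N_car by simp
    then show "w (N #> \<one>\<^bsub>HK\<^esub>) = 1\<^sub>m d" using rep_one[OF r] by simp
  qed
  have "W = {0\<^sub>v d} \<or> W = carrier_vec d" if W: "rep_invariant_subspace HK d (\<lambda>g. w (N #> g)) W" for W
  proof -
    have "rep_invariant_subspace Q d w W"
      using W unfolding rep_invariant_subspace_def carrier_Q by auto
    then show ?thesis using ir unfolding irr_rep_def by auto
  qed
  then show ?thesis using rep ir unfolding irr_rep_def by auto
qed

lemma Q_dim1: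
  fixes w :: "'a set \<Rightarrow> 'k mat"
  assumes ir: "irr_rep Q d w"
  shows "d = 1"
proof (rule ccontr)
  assume nd: "d \<noteq> 1"
  have d0: "d > 0" using ir unfolding irr_rep_def by auto
  then have d2: "1 < d" using nd by auto
  have r: "is_rep Q d w" using ir unfolding irr_rep_def by auto
  have irK: "irr_rep HK d (\<lambda>g. w (N #> g))" using inflate_rep[OF ir] .
  have scal: "\<exists>c. w a = c \<cdot>\<^sub>m 1\<^sub>m d" if a: "a \<in> carrier Q" for a
  proof -
    have "w a * w (N #> h) = w (N #> h) * w a" if h: "h \<in> carrier HK" for h
      using rep_mult[OF r a NgQ] rep_mult[OF r NgQ a] Q_abel[OF a NgQ] h by auto
    moreover have "\<forall>A\<in>carrier_mat d d. (\<forall>h\<in>carrier HK. A * w (N #> h) = w (N #> h) * A) \<longrightarrow> (\<exists>c. A = c \<cdot>\<^sub>m 1\<^sub>m d)"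
      using spl_K irK unfolding splitting_field_def by blast
    ultimately show ?thesis using rep_carrier[OF r a] by blast
  qed
  define W :: "'k vec set" where "W = {v \<in> carrier_vec d. \<forall>i. 0 < i \<longrightarrow> i < d \<longrightarrow> v $ i = 0}"
  have inv: "rep_invariant_subspace Q d w W"
    unfolding rep_invariant_subspace_def W_def
  proof (intro conjI ballI allI)
    fix a and v :: "'k vec" assume a: "a \<in> carrier Q" and v: "v \<in> {v \<in> carrier_vec d. \<forall>i. 0 < i \<longrightarrow> i < d \<longrightarrow> v $ i = 0}"
    obtain c where c: "w a = c \<cdot>\<^sub>m 1\<^sub>m d" using scal[OF a] by auto
    have "w a *\<^sub>v v = c \<cdot>\<^sub>v v" unfolding c using smult_mat_vec[OF one_carrier_mat, of v d c] v by simp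
    then show "w a *\<^sub>v v \<in> {v \<in> carrier_vec d. \<forall>i. 0 < i \<longrightarrow> i < d \<longrightarrow> v $ i = 0}" using v by auto
  qed auto
  have "unit_vec d 0 \<in> W" unfolding W_def using d0 by auto
  moreover have "unit_vec d 0 \<noteq> (0\<^sub>v d :: 'k vec)"
  proof
    assume a: "unit_vec d 0 = (0\<^sub>v d :: 'k vec)"
    have "(unit_vec d 0 :: 'k vec) $ 0 = 1" using d0 by simp
    then show False unfolding a using d0 by simp
  qed
  moreover have "unit_vec d 1 \<notin> W" unfolding W_def using d2 by auto
  ultimately have "W \<noteq> {0\<^sub>v d}" "W \<noteq> carrier_vec d" by auto
  then show False using ir inv unfolding irr_rep_def by auto
qed

lemma lin_char:
  fixes \<omega> :: "'a set \<Rightarrow> 'k"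
  assumes "irr_char Q \<omega>"
  shows "\<exists>w. irr_rep Q 1 w \<and> \<omega> = char_of Q w"
  using assms Q_dim1 unfolding irr_char_def by blast

lemma twist:
  fixes \<omega> :: "'a set \<Rightarrow> 'k" and \<psi> :: "'a \<Rightarrow> 'k"
  assumes c1: "irr_char HK \<psi>" and c2: "irr_char Q \<omega>"
  shows "irr_char HK (\<lambda>g. \<psi> g * inflate G K N \<omega> g)"
proof -
  obtain n \<rho> where ir: "irr_rep HK n \<rho>" and \<psi>: "\<psi> = char_of HK \<rho>" using c1 unfolding irr_char_def by auto
  obtain w where iw: "irr_rep Q 1 w" and \<omega>: "\<omega> = char_of Q w" using lin_char[OF c2] by auto
  have r: "is_rep HK n \<rho>" using ir unfolding irr_rep_def by auto
  have rw: "is_rep Q 1 w" using iw unfolding irr_rep_def by auto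
  define f where "f g = \<omega> (N #> g)" for g
  have fval: "f g = w (N #> g) $$ (0,0)" if "g \<in> K" for g
    unfolding f_def \<omega> char_of_def using NgQ[OF that] mat_tr_sum[OF rep_carrier[OF rw NgQ[OF that]]] by simp
  have fmult: "f (g \<otimes> h) = f g * f h" if g: "g \<in> K" and h: "h \<in> K" for g h
  proof -
    have gh: "g \<otimes> h \<in> K" using subgroup.m_closed[OF K_sub g h] by simp
    have e1: "w (N #> (g \<otimes> h)) = w (N #> g) * w (N #> h)"
      using rep_mult[OF rw NgQ[OF g] NgQ[OF h]] unfolding mult_Q[OF g h] .
    have "(w (N #> g) * w (N #> h)) $$ (0,0) = (\<Sum>k<1. w (N #> g) $$ (0,k) * w (N #> h) $$ (k,0))"
      using mult_idx[OF rep_carrier[OF rw NgQ[OF g]] rep_carrier[OF rw NgQ[OF h]], of 0 0] by simp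
    also have "\<dots> = w (N #> g) $$ (0,0) * w (N #> h) $$ (0,0)" by simp
    finally have "w (N #> (g \<otimes> h)) $$ (0,0) = w (N #> g) $$ (0,0) * w (N #> h) $$ (0,0)" unfolding e1 .
    then show ?thesis unfolding fval[OF g] fval[OF h] fval[OF gh] .
  qed
  have one: "\<one> \<in> K" using subgroup.one_closed[OF K_sub] .
  have fone: "f \<one> = 1"
  proof -
    have "N #> \<one> = N" using N_car by simp
    then have "w (N #> \<one>) = 1\<^sub>m 1" using rep_one[OF rw] by simp
    then show ?thesis unfolding fval[OF one] by simp
  qed
  have fnz: "f g \<noteq> 0" if g: "g \<in> K" for g
  proof
    assume f0: "f g = 0"
    have ig: "inv g \<in> K" using subgroup.m_inv_closed[OF K_sub g] by simp
    have gc: "g \<in> carrier G" using g K_car by auto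
    have "f (g \<otimes> inv g) = 0" unfolding fmult[OF g ig] f0 by simp
    moreover have "g \<otimes> inv g = \<one>" using gc by simp
    ultimately show False using fone by simp
  qed
  define \<rho>' where "\<rho>' g = f g \<cdot>\<^sub>m \<rho> g" for g
  have rep': "is_rep HK n \<rho>'"
    unfolding is_rep_def
  proof (intro conjI ballI)
    fix g assume "g \<in> carrier HK" then show "\<rho>' g \<in> carrier_mat n n" unfolding \<rho>'_def using rep_carrier[OF r] by auto
  next
    fix g h assume g: "g \<in> carrier HK" and h: "h \<in> carrier HK"
    show "\<rho>' (g \<otimes>\<^bsub>HK\<^esub> h) = \<rho>' g * \<rho>' h"
      unfolding \<rho>'_def using g h rep_mult[OF r g h] fmult smult_mult_mat[OF rep_carrier[OF r g] rep_carrier[OF r h]] by simp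
  next
    show "\<rho>' \<one>\<^bsub>HK\<^esub> = 1\<^sub>m n" unfolding \<rho>'_def using rep_one[OF r] fone by (intro eq_matI) auto
  qed
  have "W = {0\<^sub>v n} \<or> W = carrier_vec n" if W: "rep_invariant_subspace HK n \<rho>' W" for W
  proof -
    have "rep_invariant_subspace HK n \<rho> W"
      unfolding rep_invariant_subspace_def
    proof (intro conjI ballI allI)
      fix g v assume g: "g \<in> carrier HK" and v: "v \<in> W"
      have vc: "v \<in> carrier_vec n" using W v unfolding rep_invariant_subspace_def by auto
      have "\<rho>' g *\<^sub>v v \<in> W" using W g v unfolding rep_invariant_subspace_def by auto
      then have "(1 / f g) \<cdot>\<^sub>v (\<rho>' g *\<^sub>v v) \<in> W" using W unfolding rep_invariant_subspace_def by auto
      also have "(1 / f g) \<cdot>\<^sub>v (\<rho>' g *\<^sub>v v) = \<rho> g *\<^sub>v v"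
        unfolding \<rho>'_def using smult_mat_vec[OF rep_carrier[OF r g] vc] fnz[of g] g vc rep_carrier[OF r g]
        by (simp add: smult_smult_assoc)
      finally show "\<rho> g *\<^sub>v v \<in> W" .
    qed (use W in \<open>auto simp: rep_invariant_subspace_def\<close>)
    then show ?thesis using ir unfolding irr_rep_def by auto
  qed
  then have "irr_rep HK n \<rho>'" using rep' ir unfolding irr_rep_def by auto
  moreover have "char_of HK \<rho>' = (\<lambda>g. \<psi> g * inflate G K N \<omega> g)"
  proof
    fix g show "char_of HK \<rho>' g = \<psi> g * inflate G K N \<omega> g"
      unfolding \<psi> char_of_def inflate_def \<rho>'_def f_def
      using mat_tr_smult[OF rep_carrier[OF r]] by (auto simp: mult.commute)
  qed
  ultimately show ?thesis unfolding irr_char_def by metis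
qed

end


lemma ip_cong:
  assumes H: "group H" and f: "\<And>h. h \<in> carrier H \<Longrightarrow> f h = f' h" and g: "\<And>h. h \<in> carrier H \<Longrightarrow> g h = g' h"
  shows "ip H f g = ip H f' g'"
  unfolding ip_def using f g group.inv_closed[OF H] by (intro arg_cong2[where f="(/)"] sum.cong refl) auto

lemma ip_sum_right: "ip H f (\<lambda>h. \<Sum>i\<in>I. F i h) = (\<Sum>i\<in>I. ip H f (F i))"
proof -
  have "(\<Sum>h\<in>carrier H. \<Sum>n\<in>I. f h * F n (inv\<^bsub>H\<^esub> h)) = (\<Sum>i\<in>I. \<Sum>h\<in>carrier H. f h * F i (inv\<^bsub>H\<^esub> h))"
    by (rule sum.swap)
  then show ?thesis unfolding ip_def by (simp add: sum_distrib_left sum_divide_distrib[symmetric])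
qed

lemma ip_sum_left: "ip H (\<lambda>h. \<Sum>i\<in>I. F i h) g = (\<Sum>i\<in>I. ip H (\<lambda>h. F i h) g)"
proof -
  have "(\<Sum>h\<in>carrier H. \<Sum>n\<in>I. F n h * g (inv\<^bsub>H\<^esub> h)) = (\<Sum>i\<in>I. \<Sum>h\<in>carrier H. F i h * g (inv\<^bsub>H\<^esub> h))"
    by (rule sum.swap)
  then show ?thesis unfolding ip_def by (simp add: sum_distrib_right sum_divide_distrib[symmetric])
qed

lemma ip_listmap_right: "ip H f (\<lambda>h. \<Sum>x\<leftarrow>xs. F x h) = (\<Sum>x\<leftarrow>xs. ip H f (F x))"
proof (induction xs)
  case Nil then show ?case by (simp add: ip_def)
next
  case (Cons a xs)
  have "ip H f (\<lambda>h. \<Sum>x\<leftarrow>a # xs. F x h) = ip H f (F a) + ip H f (\<lambda>h. \<Sum>x\<leftarrow>xs. F x h)"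
    unfolding ip_def by (simp add: distrib_left sum.distrib add_divide_distrib)
  then show ?case using Cons by simp
qed

lemma sum_list_cmult: "(\<Sum>x\<leftarrow>xs. (a::'k::semiring_1) * F x) = a * (\<Sum>x\<leftarrow>xs. F x)"
  by (induction xs) (auto simp: distrib_left)

lemma ip_scale_right: "ip H f (\<lambda>h. c * g h) = c * ip H f g"
  unfolding ip_def by (simp add: sum_distrib_left mult_ac)

lemma ip_scale_left: "ip H (\<lambda>h. c * f h) g = c * ip H f g"
  unfolding ip_def by (simp add: sum_distrib_left mult_ac)

lemma ip_list_left: "ip H (\<lambda>h. \<Sum>\<theta>\<leftarrow>L. \<theta> h) g = (\<Sum>\<theta>\<leftarrow>L. ip H \<theta> g)"
proof (induction L)
  case Nil then show ?case by (simp add: ip_def)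
next
  case (Cons a L)
  have "ip H (\<lambda>h. \<Sum>\<theta>\<leftarrow>a # L. \<theta> h) g = ip H a g + ip H (\<lambda>h. \<Sum>\<theta>\<leftarrow>L. \<theta> h) g"
    unfolding ip_def by (simp add: distrib_right sum.distrib add_divide_distrib)
  then show ?case using Cons by simp
qed

lemma ip_list_right: "ip H f (\<lambda>h. \<Sum>\<theta>\<leftarrow>L. \<theta> h) = (\<Sum>\<theta>\<leftarrow>L. ip H f \<theta>)"
proof (induction L)
  case Nil then show ?case by (simp add: ip_def)
next
  case (Cons a L)
  have "ip H f (\<lambda>h. \<Sum>\<theta>\<leftarrow>a # L. \<theta> h) = ip H f a + ip H f (\<lambda>h. \<Sum>\<theta>\<leftarrow>L. \<theta> h)"
    unfolding ip_def by (simp add: distrib_left sum.distrib add_divide_distrib)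
  then show ?case using Cons by simp
qed

lemma count_sum: "(\<Sum>\<theta>\<leftarrow>L. if \<theta> = a then (1::'k::semiring_1) else 0) = of_nat (length (filter (\<lambda>\<theta>. \<theta> = a) L))"
  by (induction L) auto

lemma exists_of_sum: "(\<Sum>x\<leftarrow>xs. if P x then (1::'k::semiring_1) else 0) \<noteq> 0 \<Longrightarrow> \<exists>x\<in>set xs. P x"
  by (induction xs) (auto split: if_splits)

lemma sum_list_const: "(\<forall>\<theta>\<in>set L. \<theta> = a) \<Longrightarrow> (\<Sum>\<theta>\<leftarrow>L. \<theta> g) = of_nat (length L) * (a g :: 'k::semiring_1)"
  by (induction L) (auto simp: distrib_right)


context clif
begin

definition qf :: 'k where "qf = of_nat (card K) / of_nat (card N)"

lemma cardN0: "card N \<noteq> 0"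
proof -
  have "\<one> \<in> N" using subgroup.one_closed[OF N_sub] .
  then show ?thesis using fin_N by auto
qed

lemma cardK0: "card K \<noteq> 0"
proof -
  have "\<one> \<in> K" using subgroup.one_closed[OF K_sub] .
  then show ?thesis using fin_K by auto
qed

lemma qf_Q: "qf = of_nat (card (carrier Q))"
proof -
  have "of_nat (card (carrier Q)) * (of_nat (card N) :: 'k) = of_nat (card K)"
    using card_Q by (metis of_nat_mult)
  then show ?thesis unfolding qf_def using cardN0 by (simp add: field_simps)
qed

lemma eta_zero: "g \<notin> N \<Longrightarrow> \<eta> g = 0"
  using eta unfolding irr_char_def char_of_def by auto

lemma ind_eta: "ind_char HK N \<eta> = (\<lambda>g. if g \<in> N then qf * \<eta> g else 0)"
proof
  fix g
  show "ind_char HK N \<eta> g = (if g \<in> N then qf * \<eta> g else 0)"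
  proof (cases "g \<in> K")
    case False
    then have "g \<notin> N" using N_K by auto
    then show ?thesis using False unfolding ind_char_def by simp
  next
    case gK: True
    have gc: "g \<in> carrier G" using gK K_car by auto
    show ?thesis
    proof (cases "g \<in> N")
      case True
      have "(\<Sum>x\<in>K. if inv\<^bsub>HK\<^esub> x \<otimes>\<^bsub>HK\<^esub> g \<otimes>\<^bsub>HK\<^esub> x \<in> N then \<eta> (inv\<^bsub>HK\<^esub> x \<otimes>\<^bsub>HK\<^esub> g \<otimes>\<^bsub>HK\<^esub> x) else 0)
          = (\<Sum>x\<in>K. \<eta> g)"
      proof (intro sum.cong refl)
        fix x assume x: "x \<in> K"
        then have xc: "x \<in> carrier G" using K_car by auto
        have "inv x \<otimes> g \<otimes> x \<in> N" using conj_N[OF xc True] .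
        moreover have "\<eta> (inv x \<otimes> g \<otimes> x) = \<eta> g" using x True unfolding inertia_def by auto
        ultimately show "(if inv\<^bsub>HK\<^esub> x \<otimes>\<^bsub>HK\<^esub> g \<otimes>\<^bsub>HK\<^esub> x \<in> N then \<eta> (inv\<^bsub>HK\<^esub> x \<otimes>\<^bsub>HK\<^esub> g \<otimes>\<^bsub>HK\<^esub> x) else 0) = \<eta> g"
          using x by simp
      qed
      then show ?thesis unfolding ind_char_def qf_def using gK True by simp
    next
      case False
      have "(\<Sum>x\<in>K. if inv\<^bsub>HK\<^esub> x \<otimes>\<^bsub>HK\<^esub> g \<otimes>\<^bsub>HK\<^esub> x \<in> N then \<eta> (inv\<^bsub>HK\<^esub> x \<otimes>\<^bsub>HK\<^esub> g \<otimes>\<^bsub>HK\<^esub> x) else 0) = 0"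
      proof (intro sum.neutral ballI)
        fix x assume x: "x \<in> K"
        then have xc: "x \<in> carrier G" using K_car by auto
        have "inv x \<otimes> g \<otimes> x \<notin> N" using conj_N_iff[OF xc gc] False by simp
        then show "(if inv\<^bsub>HK\<^esub> x \<otimes>\<^bsub>HK\<^esub> g \<otimes>\<^bsub>HK\<^esub> x \<in> N then \<eta> (inv\<^bsub>HK\<^esub> x \<otimes>\<^bsub>HK\<^esub> g \<otimes>\<^bsub>HK\<^esub> x) else 0) = 0"
          using x by simp
      qed
      then show ?thesis unfolding ind_char_def using gK False by simp
    qed
  qed
qed

lemma ip_supported: "ip HK f (\<lambda>g. if g \<in> N then qf * \<phi> g else 0) = ip HN f \<phi>"
proof -
  have "(\<Sum>g\<in>K. f g * (if inv\<^bsub>HK\<^esub> g \<in> N then qf * \<phi> (inv\<^bsub>HK\<^esub> g) else 0))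
      = (\<Sum>g\<in>K. if g \<in> N then qf * (f g * \<phi> (inv g)) else 0)"
  proof (intro sum.cong refl)
    fix g assume g: "g \<in> K"
    have "inv g \<in> N \<longleftrightarrow> g \<in> N"
      using subgroup.m_inv_closed[OF N_sub, of g] subgroup.m_inv_closed[OF N_sub, of "inv g"] g K_car by auto
    then show "f g * (if inv\<^bsub>HK\<^esub> g \<in> N then qf * \<phi> (inv\<^bsub>HK\<^esub> g) else 0) = (if g \<in> N then qf * (f g * \<phi> (inv g)) else 0)"
      using g by simp
  qed
  also have "\<dots> = (\<Sum>g\<in>N. qf * (f g * \<phi> (inv g)))"
  proof -
    have e: "K \<inter> {x. x \<in> N} = N" using N_K by auto
    show ?thesis unfolding sum.If_cases[OF fin_K] e by simp
  qed
  also have "\<dots> = qf * (\<Sum>g\<in>N. f g * \<phi> (inv\<^bsub>HN\<^esub> g))" by (simp add: sum_distrib_left)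
  finally show ?thesis unfolding ip_def qf_def using cardK0 cardN0 by simp
qed

end


context clif
begin

lemma finHN: "finite (carrier HN)" using fin_N by simp
lemma finHK: "finite (carrier HK)" using fin_K by simp

lemma orthN: fixes \<chi> \<chi>' :: "'a \<Rightarrow> 'k" shows "irr_char HN \<chi> \<Longrightarrow> irr_char HN \<chi>' \<Longrightarrow> ip HN \<chi> \<chi>' = (if \<chi> = \<chi>' then 1 else 0)"
  by (rule orth[OF HN_grp finHN spl_N])
lemma orthK: fixes \<chi> \<chi>' :: "'a \<Rightarrow> 'k" shows "irr_char HK \<chi> \<Longrightarrow> irr_char HK \<chi>' \<Longrightarrow> ip HK \<chi> \<chi>' = (if \<chi> = \<chi>' then 1 else 0)"
  by (rule orth[OF HK_grp finHK spl_K])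

lemma res_rep: "is_rep HK d \<rho> \<Longrightarrow> is_rep HN d \<rho>"
  unfolding is_rep_def using N_K by auto

lemma eta_one: "\<eta> \<one> \<noteq> 0"
proof -
  obtain d \<rho> where ir: "irr_rep HN d \<rho>" and e: "\<eta> = char_of HN \<rho>" using eta unfolding irr_char_def by auto
  have "\<rho> \<one> = 1\<^sub>m d" using ir unfolding irr_rep_def is_rep_def by auto
  moreover have "d > 0" using ir unfolding irr_rep_def by auto
  moreover have "\<one> \<in> N" using subgroup.one_closed[OF N_sub] .
  ultimately show ?thesis unfolding e char_of_def mat_tr_def by simp
qed

lemma omega_one: fixes \<omega> :: "'a set \<Rightarrow> 'k" assumes "irr_char Q \<omega>" shows "\<omega> N = 1"
proof -
  obtain w where iw: "irr_rep Q 1 w" and e: "\<omega> = char_of Q w" using lin_char[OF assms] by auto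
  have NQ: "N \<in> carrier Q" using NgQ[OF subgroup.one_closed[OF K_sub]] N_car by simp
  have "w N = 1\<^sub>m 1" using iw unfolding irr_rep_def is_rep_def by auto
  then show ?thesis unfolding e char_of_def mat_tr_def using NQ by simp
qed

lemma inflate_N: fixes \<omega> :: "'a set \<Rightarrow> 'k" assumes "irr_char Q \<omega>" "g \<in> N" shows "inflate G K N \<omega> g = 1"
proof -
  have gK: "g \<in> K" using assms N_K by auto
  then have "N #> g = N" using rcos_N_iff[OF gK] assms(2) by simp
  then show ?thesis unfolding inflate_def using gK omega_one[OF assms(1)] by simp
qed

lemma finQ: "finite (carrier Q)" unfolding carrier_Q using fin_K by simp

lemma main:
  fixes s :: nat and m :: "nat \<Rightarrow> nat" and \<psi> :: "nat \<Rightarrow> 'a \<Rightarrow> 'k"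
  assumes s1: "1 \<le> s" and mpos: "\<And>i. i \<in> {1..s} \<Longrightarrow> m i > 0"
    and psi: "\<And>i. i \<in> {1..s} \<Longrightarrow> irr_char HK (\<psi> i)"
    and inj: "inj_on \<psi> {1..s}"
    and dec: "ind_char HK N \<eta> = (\<lambda>g. \<Sum>i=1..s. of_nat (m i) * \<psi> i g)"
  shows "(\<forall>i\<in>{1..s}. \<exists>\<omega>. irr_char Q \<omega> \<and> \<psi> i = (\<lambda>g. \<psi> 1 g * inflate G K N \<omega> g))
       \<and> (\<forall>\<omega>. irr_char Q \<omega> \<longrightarrow> (\<exists>i\<in>{1..s}. \<psi> i = (\<lambda>g. \<psi> 1 g * inflate G K N \<omega> g)))
       \<and> (\<forall>i\<in>{1..s}. m i = m 1)
       \<and> card (carrier Q) = s * (m 1)^2"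
proof -
  have one_s: "1 \<in> {1..s}" using s1 by auto
  have dec2: "(\<lambda>g. \<Sum>i=1..s. of_nat (m i) * \<psi> i g) = (\<lambda>g. if g \<in> N then qf * \<eta> g else 0)"
    using dec ind_eta by simp
  have "\<forall>i\<in>{1..s}. \<exists>L. (\<forall>\<theta>\<in>set L. irr_char HN \<theta>) \<and> (\<forall>g\<in>N. \<psi> i g = (\<Sum>\<theta>\<leftarrow>L. \<theta> g))"
  proof
    fix i assume i: "i \<in> {1..s}"
    obtain d \<rho> where ir: "irr_rep HK d \<rho>" and e: "\<psi> i = char_of HK \<rho>" using psi[OF i] unfolding irr_char_def by auto
    have r: "is_rep HN d \<rho>" using res_rep ir unfolding irr_rep_def by auto
    obtain L where L: "\<forall>\<theta>\<in>set L. irr_char HN \<theta>" "char_of HN \<rho> = (\<lambda>h. \<Sum>\<theta>\<leftarrow>L. \<theta> h)"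
      using char_decomp[OF r] by blast
    have "\<forall>g\<in>N. \<psi> i g = (\<Sum>\<theta>\<leftarrow>L. \<theta> g)"
    proof
      fix g assume g: "g \<in> N"
      have "\<psi> i g = char_of HN \<rho> g" unfolding e char_of_def using g N_K by auto
      then show "\<psi> i g = (\<Sum>\<theta>\<leftarrow>L. \<theta> g)" using L(2) by simp
    qed
    then show "\<exists>L. (\<forall>\<theta>\<in>set L. irr_char HN \<theta>) \<and> (\<forall>g\<in>N. \<psi> i g = (\<Sum>\<theta>\<leftarrow>L. \<theta> g))" using L(1) by blast
  qed
  then have "\<exists>L. \<forall>i\<in>{1..s}. (\<forall>\<theta>\<in>set (L i). irr_char HN \<theta>) \<and> (\<forall>g\<in>N. \<psi> i g = (\<Sum>\<theta>\<leftarrow>L i. \<theta> g))"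
    by (rule bchoice)
  then obtain L where L0: "\<forall>i\<in>{1..s}. (\<forall>\<theta>\<in>set (L i). irr_char HN \<theta>) \<and> (\<forall>g\<in>N. \<psi> i g = (\<Sum>\<theta>\<leftarrow>L i. \<theta> g))"
    by (elim exE)
  have L: "\<And>i. i \<in> {1..s} \<Longrightarrow> (\<forall>\<theta>\<in>set (L i). irr_char HN \<theta>)"
    "\<And>i g. i \<in> {1..s} \<Longrightarrow> g \<in> N \<Longrightarrow> \<psi> i g = (\<Sum>\<theta>\<leftarrow>L i. \<theta> g)" using L0 by auto
  have allEta: "\<forall>\<theta>\<in>set (L i). \<theta> = \<eta>" if i: "i \<in> {1..s}" for i
  proof (rule ccontr)
    assume "\<not> (\<forall>\<theta>\<in>set (L i). \<theta> = \<eta>)"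
    then obtain \<theta>0 where t0: "\<theta>0 \<in> set (L i)" "\<theta>0 \<noteq> \<eta>" by auto
    have irt0: "irr_char HN \<theta>0" using L(1)[OF i] t0 by auto
    define F where "F g = (\<Sum>j=1..s. of_nat (m j) * (\<Sum>\<theta>\<leftarrow>L j. \<theta> g))" for g
    have "ip HN F \<theta>0 = ip HN (\<lambda>g. qf * \<eta> g) \<theta>0"
    proof (rule ip_cong[OF HN_grp])
      fix g assume "g \<in> carrier HN"
      then have g: "g \<in> N" by simp
      have "F g = (\<Sum>j=1..s. of_nat (m j) * \<psi> j g)" unfolding F_def using L(2) g by (intro sum.cong refl) auto
      also have "\<dots> = qf * \<eta> g" using fun_cong[OF dec2, of g] g by simp
      finally show "F g = qf * \<eta> g" .
    qed simp
    also have "\<dots> = 0" unfolding ip_scale_left orthN[OF eta irt0] using t0 by simp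
    finally have z: "ip HN F \<theta>0 = 0" .
    have "ip HN F \<theta>0 = (\<Sum>j=1..s. of_nat (m j) * (\<Sum>\<theta>\<leftarrow>L j. ip HN \<theta> \<theta>0))"
      unfolding F_def ip_sum_left ip_scale_left ip_list_left by simp
    also have "\<dots> = (\<Sum>j=1..s. of_nat (m j) * (\<Sum>\<theta>\<leftarrow>L j. if \<theta> = \<theta>0 then 1 else 0))"
      using L(1) irt0 by (intro sum.cong refl arg_cong2[where f="(*)"] arg_cong[where f=sum_list] map_cong) (auto simp: orthN)
    also have "\<dots> = of_nat (\<Sum>j=1..s. m j * length (filter (\<lambda>\<theta>. \<theta> = \<theta>0) (L j)))"
      unfolding count_sum by simp
    finally have "of_nat (\<Sum>j=1..s. m j * length (filter (\<lambda>\<theta>. \<theta> = \<theta>0) (L j))) = (0::'k)" using z by simp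
    then have "(\<Sum>j=1..s. m j * length (filter (\<lambda>\<theta>. \<theta> = \<theta>0) (L j))) = 0" by (simp only: of_nat_eq_0_iff)
    then have "m i * length (filter (\<lambda>\<theta>. \<theta> = \<theta>0) (L i)) = 0" using i by simp
    moreover have "filter (\<lambda>\<theta>. \<theta> = \<theta>0) (L i) \<noteq> []" using t0 by (simp add: filter_empty_conv)
    then have "length (filter (\<lambda>\<theta>. \<theta> = \<theta>0) (L i)) > 0" by simp
    ultimately show False using mpos[OF i] by simp
  qed
  define c where "c i = length (L i)" for i
  have psiN: "\<psi> i g = of_nat (c i) * \<eta> g" if i: "i \<in> {1..s}" and g: "g \<in> N" for i g
    unfolding L(2)[OF i g] c_def using sum_list_const[OF allEta[OF i]] by simp
  have ip_ind: "ip HK f (ind_char HK N \<eta>) = ip HN f \<eta>" for f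
    unfolding ind_eta ip_supported ..
  have ipdec: "ip HK \<phi> (ind_char HK N \<eta>) = (\<Sum>j=1..s. if \<phi> = \<psi> j then of_nat (m j) else 0)"
    if ph: "irr_char HK \<phi>" for \<phi>
  proof -
    have "ip HK \<phi> (ind_char HK N \<eta>) = (\<Sum>j=1..s. ip HK \<phi> (\<lambda>g. of_nat (m j) * \<psi> j g))"
      unfolding dec ip_sum_right ..
    also have "\<dots> = (\<Sum>j=1..s. of_nat (m j) * ip HK \<phi> (\<psi> j))" unfolding ip_scale_right ..
    also have "\<dots> = (\<Sum>j=1..s. if \<phi> = \<psi> j then of_nat (m j) else 0)"
      by (intro sum.cong refl) (simp add: orthK[OF ph psi])
    finally show ?thesis .
  qed
  have etaeta: "ip HN \<eta> \<eta> = 1" using orthN[OF eta eta] by simp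
  have ipN_c: "ip HN (\<lambda>g. of_nat a * \<eta> g) (\<lambda>g. of_nat b * \<eta> g) = of_nat a * of_nat b" for a b
    unfolding ip_scale_left ip_scale_right etaeta by simp
  have cm: "c i = m i" if i: "i \<in> {1..s}" for i
  proof -
    have "ip HK (\<psi> i) (ind_char HK N \<eta>) = (\<Sum>j=1..s. if \<psi> i = \<psi> j then of_nat (m j) else 0)"
      using ipdec[OF psi[OF i]] .
    also have "\<dots> = (\<Sum>j=1..s. if j = i then of_nat (m j) else 0)"
    proof (intro sum.cong refl)
      fix j assume j: "j \<in> {1..s}"
      have "\<psi> i = \<psi> j \<longleftrightarrow> i = j" by (rule inj_on_eq_iff[OF inj i j])
      then show "(if \<psi> i = \<psi> j then of_nat (m j) else 0) = (if j = i then of_nat (m j) else (0::'k))" by auto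
    qed
    also have "\<dots> = of_nat (m i)" using i by simp
    finally have a: "ip HK (\<psi> i) (ind_char HK N \<eta>) = of_nat (m i)" .
    have "ip HK (\<psi> i) (ind_char HK N \<eta>) = ip HN (\<lambda>g. of_nat (c i) * \<eta> g) (\<lambda>g. of_nat 1 * \<eta> g)"
      unfolding ip_ind
    proof (rule ip_cong[OF HN_grp])
      fix h assume "h \<in> carrier HN"
      then have h: "h \<in> N" by simp
      show "\<psi> i h = of_nat (c i) * \<eta> h" using psiN[OF i h] .
    qed simp
    also have "\<dots> = of_nat (c i)" unfolding ipN_c by simp
    finally have "(of_nat (m i) :: 'k) = of_nat (c i)" using a by simp
    then show ?thesis by (simp only: of_nat_eq_iff)
  qed
  have partii: "\<exists>i\<in>{1..s}. \<psi> i = (\<lambda>g. \<psi> 1 g * inflate G K N \<omega> g)" if om: "irr_char Q \<omega>" for \<omega>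
  proof (rule ccontr)
    assume nex: "\<not> (\<exists>i\<in>{1..s}. \<psi> i = (\<lambda>g. \<psi> 1 g * inflate G K N \<omega> g))"
    define \<phi> where "\<phi> = (\<lambda>g. \<psi> 1 g * inflate G K N \<omega> g)"
    have ph: "irr_char HK \<phi>" unfolding \<phi>_def using twist[OF psi[OF one_s] om] .
    have "ip HK \<phi> (ind_char HK N \<eta>) = 0" unfolding ipdec[OF ph]
    proof (intro sum.neutral ballI)
      fix j assume j: "j \<in> {1..s}"
      have "\<phi> \<noteq> \<psi> j" using nex j unfolding \<phi>_def by metis
      then show "(if \<phi> = \<psi> j then of_nat (m j) else 0) = (0::'k)" by simp
    qed
    moreover have "ip HK \<phi> (ind_char HK N \<eta>) = ip HN (\<lambda>g. of_nat (c 1) * \<eta> g) (\<lambda>g. of_nat 1 * \<eta> g)"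
      unfolding ip_ind
    proof (rule ip_cong[OF HN_grp])
      fix h assume "h \<in> carrier HN"
      then have h: "h \<in> N" by simp
      show "\<phi> h = of_nat (c 1) * \<eta> h" unfolding \<phi>_def using psiN[OF one_s h] inflate_N[OF om h] by simp
    qed simp
    moreover have "\<dots> = of_nat (m 1)" unfolding ipN_c cm[OF one_s] by simp
    ultimately show False using mpos[OF one_s] by simp
  qed
  obtain xs where xs: "\<forall>\<omega>\<in>set xs. irr_char Q (\<omega> :: 'a set \<Rightarrow> 'k)"
    "\<forall>a\<in>carrier Q. (\<Sum>\<omega>\<leftarrow>xs. \<omega> a) = (if a = \<one>\<^bsub>Q\<^esub> then of_nat (card (carrier Q)) else 0)"
  proof -
    have "\<exists>xs. (\<forall>\<omega>\<in>set xs. irr_char Q (\<omega> :: 'a set \<Rightarrow> 'k)) \<and>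
      (\<forall>a\<in>carrier Q. (\<Sum>\<omega>\<leftarrow>xs. \<omega> a) = (if a = \<one>\<^bsub>Q\<^esub> then of_nat (card (carrier Q)) else 0))"
      by (rule group.reg_decomp[OF Q_grp finQ])
    then show ?thesis using that by (elim exE conjE)
  qed
  have parti: "\<exists>\<omega>. irr_char Q \<omega> \<and> \<psi> i = (\<lambda>g. \<psi> 1 g * inflate G K N \<omega> g)" if i: "i \<in> {1..s}" for i
  proof -
    define PP where "PP = (\<lambda>g. \<Sum>\<omega>\<leftarrow>xs. \<psi> 1 g * inflate G K N \<omega> g)"
    have Pi: "PP = (\<lambda>g. if g \<in> N then qf * \<psi> 1 g else 0)"
    proof
      fix g show "PP g = (if g \<in> N then qf * \<psi> 1 g else 0)"
      proof (cases "g \<in> K")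
        case False
        then show ?thesis unfolding PP_def inflate_def using N_K by auto
      next
        case True
        have "PP g = \<psi> 1 g * (\<Sum>\<omega>\<leftarrow>xs. \<omega> (N #> g))" unfolding PP_def inflate_def sum_list_cmult[symmetric] using True by simp
        also have "\<dots> = \<psi> 1 g * (if N #> g = N then of_nat (card (carrier Q)) else 0)" using xs(2) NgQ[OF True] by simp
        also have "\<dots> = (if g \<in> N then qf * \<psi> 1 g else 0)" using rcos_N_iff[OF True] qf_Q by simp
        finally show ?thesis .
      qed
    qed
    have "ip HK (\<psi> i) PP = ip HN (\<lambda>g. of_nat (c i) * \<eta> g) (\<lambda>g. of_nat (c 1) * \<eta> g)"
      unfolding Pi ip_supported
    proof (rule ip_cong[OF HN_grp])
      fix h assume "h \<in> carrier HN"
      then have h: "h \<in> N" by simp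
      show "\<psi> i h = of_nat (c i) * \<eta> h" using psiN[OF i h] .
      show "\<psi> 1 h = of_nat (c 1) * \<eta> h" using psiN[OF one_s h] .
    qed
    also have "\<dots> = of_nat (m i * m 1)" unfolding ipN_c cm[OF i] cm[OF one_s] by simp
    finally have a: "ip HK (\<psi> i) PP = of_nat (m i * m 1)" .
    have "ip HK (\<psi> i) PP = (\<Sum>\<omega>\<leftarrow>xs. ip HK (\<psi> i) (\<lambda>g. \<psi> 1 g * inflate G K N \<omega> g))"
      unfolding PP_def ip_listmap_right ..
    also have "\<dots> = (\<Sum>\<omega>\<leftarrow>xs. if \<psi> i = (\<lambda>g. \<psi> 1 g * inflate G K N \<omega> g) then 1 else 0)"
    proof (intro arg_cong[where f=sum_list] map_cong refl)
      fix \<omega> assume "\<omega> \<in> set xs"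
      then have "irr_char Q \<omega>" using xs(1) by simp
      then show "ip HK (\<psi> i) (\<lambda>g. \<psi> 1 g * inflate G K N \<omega> g) = (if \<psi> i = (\<lambda>g. \<psi> 1 g * inflate G K N \<omega> g) then 1 else 0)"
        using orthK[OF psi[OF i] twist[OF psi[OF one_s]]] by simp
    qed
    finally have b: "ip HK (\<psi> i) PP = (\<Sum>\<omega>\<leftarrow>xs. if \<psi> i = (\<lambda>g. \<psi> 1 g * inflate G K N \<omega> g) then 1 else 0)" .
    have "m i * m 1 \<noteq> 0" using mpos[OF i] mpos[OF one_s] by simp
    then have "(of_nat (m i * m 1) :: 'k) \<noteq> 0" by (simp only: of_nat_eq_0_iff not_False_eq_True)
    then have "(\<Sum>\<omega>\<leftarrow>xs. if \<psi> i = (\<lambda>g. \<psi> 1 g * inflate G K N \<omega> g) then 1 else 0) \<noteq> (0::'k)"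
      using a b by simp
    from exists_of_sum[OF this] obtain \<omega> where om: "\<omega> \<in> set xs" "\<psi> i = (\<lambda>g. \<psi> 1 g * inflate G K N \<omega> g)" by (elim bexE)
    have "irr_char Q \<omega>" using xs(1) om(1) by simp
    then show ?thesis using om(2) by (intro exI[of _ \<omega>]) simp
  qed
  have one_N: "\<one> \<in> N" using subgroup.one_closed[OF N_sub] .
  have psi1: "\<psi> i \<one> = of_nat (m i) * \<eta> \<one>" if i: "i \<in> {1..s}" for i
    using psiN[OF i one_N] cm[OF i] by simp
  have mm: "m i = m 1" if i: "i \<in> {1..s}" for i
  proof -
    obtain \<omega> where om: "irr_char Q \<omega>" and e: "\<psi> i = (\<lambda>g. \<psi> 1 g * inflate G K N \<omega> g)" using parti[OF i] by blast
    have "\<psi> i \<one> = \<psi> 1 \<one>" using fun_cong[OF e, of \<one>] inflate_N[OF om one_N] by simp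
    then have "(of_nat (m i) :: 'k) * \<eta> \<one> = of_nat (m 1) * \<eta> \<one>" using psi1[OF i] psi1[OF one_s] by simp
    then show ?thesis using eta_one by simp
  qed
  have "qf * \<eta> \<one> = (\<Sum>i=1..s. of_nat (m i) * \<psi> i \<one>)" using fun_cong[OF dec2, of \<one>] one_N by simp
  also have "\<dots> = (\<Sum>i=1..s. of_nat (m 1 * m 1) * \<eta> \<one>)"
  proof (intro sum.cong refl)
    fix i assume i: "i \<in> {1..s}"
    have "of_nat (m i) * \<psi> i \<one> = of_nat (m i) * (of_nat (m i) * \<eta> \<one>)" unfolding psi1[OF i] ..
    also have "\<dots> = of_nat (m 1 * m 1) * \<eta> \<one>" unfolding mm[OF i] by simp
    finally show "of_nat (m i) * \<psi> i \<one> = of_nat (m 1 * m 1) * \<eta> \<one>" .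
  qed
  also have "\<dots> = of_nat (s * (m 1)^2) * \<eta> \<one>" by (simp add: power2_eq_square)
  finally have "qf = of_nat (s * (m 1)^2)" using eta_one by simp
  then have cQ: "card (carrier Q) = s * (m 1)^2" unfolding qf_Q by (simp only: of_nat_eq_iff)
  show ?thesis using parti partii mm cQ by blast
qed

end


theorem proposition2p3:
  fixes G :: "('g, 'b) monoid_scheme"
    and N :: "'g set"
    and \<chi> \<eta> :: "'g \<Rightarrow> 'k::field_char_0"
    and s :: nat and m :: "nat \<Rightarrow> nat" and \<psi> :: "nat \<Rightarrow> 'g \<Rightarrow> 'k"
  assumes "group G" and "finite (carrier G)"
    and "\<And>H. subgroup H G \<Longrightarrow> splitting_field TYPE('k) (G\<lparr>carrier := H\<rparr>)"
    and "N \<lhd> G" and "derived G (carrier G) \<subseteq> N"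
    and "irr_char G \<chi>"
    and "irr_char (G\<lparr>carrier := N\<rparr>) \<eta>"
    and "constituent (G\<lparr>carrier := N\<rparr>) \<eta> (res_char N \<chi>)"
    and "1 \<le> s"
    and "\<And>i. i \<in> {1..s} \<Longrightarrow> m i > 0"
    and "\<And>i. i \<in> {1..s} \<Longrightarrow> irr_char (G\<lparr>carrier := inertia G N \<eta>\<rparr>) (\<psi> i)"
    and "inj_on \<psi> {1..s}"
    and "ind_char (G\<lparr>carrier := inertia G N \<eta>\<rparr>) N \<eta> = (\<lambda>g. \<Sum>i=1..s. of_nat (m i) * \<psi> i g)"
    and "ind_char G (inertia G N \<eta>) (\<psi> 1) = \<chi>"
  shows "(\<forall>i\<in>{1..s}. \<exists>\<omega>. irr_char (G\<lparr>carrier := inertia G N \<eta>\<rparr> Mod N) \<omega> \<and>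
            \<psi> i = (\<lambda>g. \<psi> 1 g * inflate G (inertia G N \<eta>) N \<omega> g))
       \<and> (\<forall>\<omega>. irr_char (G\<lparr>carrier := inertia G N \<eta>\<rparr> Mod N) \<omega> \<longrightarrow>
            (\<exists>i\<in>{1..s}. \<psi> i = (\<lambda>g. \<psi> 1 g * inflate G (inertia G N \<eta>) N \<omega> g)))
       \<and> (\<forall>i\<in>{1..s}. m i = m 1)
       \<and> card (carrier (G\<lparr>carrier := inertia G N \<eta>\<rparr> Mod N)) = s * (m 1)^2"
proof -
  interpret C: clif G N \<eta>
  proof (rule clif.intro)
    show "group G" by (rule assms(1))
    show "clif_axioms G N \<eta>" by (rule clif_axioms.intro[OF assms(2) assms(3) assms(4) assms(5) assms(7)])
  qed
  show ?thesis by (rule C.main[OF assms(9) assms(10) assms(11) assms(12) assms(13)])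
qed

end
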